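(* In the setting described in the context, suppose $p_i,p_j,p_k,p_l,p_u,p_w\in S_1$ satisfy $d(p_i,p_k)\ne d(p_j,p_l)$, $d(p_i,p_u)\ne d(p_j,p_w)$ and $d(p_k,p_u)\ne d(p_l,p_w)$. Then $|C_{ij}\cap C_{kl}\cap C_{uw}|\le2d$, unless $C_2$ is a conic or a line.
   Context: A plane algebraic curve is an infinite set $Z_{\mathbb{R}}(f)=\{(a,b)\in\mathbb{R}^2:f(a,b)=0\}$ for a nonzero $f\in\mathbb{R}[x,y]$; its degree is the minimal degree of such $f$; it is irreducible if $f$ can be chosen irreducible over $\mathbb{R}$. A conic is a curve of degree 2 that is not a union of two lines. Setting: $d\ge1$; $C_1=Z_{\mathbb{R}}(f_1)$ and $C_2=Z_{\mathbb{R}}(f_2)$ are irreducible plane algebraic curves of degree at most $d$ (possibly equal), with $f_1,f_2$ of minimum degree. $S_1=\{p_1,\dots,p_m\}\subset C_1$ and $S_2=\{q_1,\dots,q_n\}\subset C_2$ are sets of distinct points, $p_i=(a_i,b_i)$, satisfying: (1) neither $C_1$ nor $C_2$ is a vertical line; (2) $S_1\cap S_2=\emptyset$; (3) if $C_1$ (resp. $C_2$) is a circle, its center is not in $S_2$ (resp. $S_1$); (4) if $C_1$ (resp. $C_2$) is a circle, every concentric circle contains at most one point of $S_2$ (resp. $S_1$); (5) if $C_1$ (resp. $C_2$) is a line, then for every line $\ell$ parallel to it, the union of $\ell$ and its reflection in $C_1$ (resp. $C_2$) contains at most one point of $S_2$ (resp. $S_1$); (6) if $C_1$ (resp. $C_2$)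 is a line, every orthogonal line contains at most one point of $S_2$ (resp. $S_1$). For $1\le i,j\le m$, $C_{ij}\subset\mathbb{R}^4$ is the set of $(x,y,x',y')$ with $f_2(x,y)=0$, $f_2(x',y')=0$ and $(x-a_i)^2+(y-b_i)^2=(x'-a_j)^2+(y'-b_j)^2$. $d(\cdot,\cdot)$ is Euclidean distance. *)

theory Defs
  imports "HOL-Analysis.Analysis" "HOL-Computational_Algebra.Polynomial_Factorial"
begin

text \<open>Bivariate real polynomials are encoded as elements of real poly poly:
  f = sum_i (coeff f i)(x) * y^i, with coefficients polynomials in x.\<close>

type_synonym bipoly = "real poly poly"

definition eval2 :: "bipoly \<Rightarrow> real \<Rightarrow> real \<Rightarrow> real" where
  "eval2 f a b = poly (map_poly (\<lambda>c. poly c a) f) b"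

definition tdeg :: "bipoly \<Rightarrow> nat" where
  "tdeg f = Max ({0} \<union> {degree (coeff f i) + i | i. i \<le> degree f \<and> coeff f i \<noteq> 0})"

definition zset :: "bipoly \<Rightarrow> (real \<times> real) set" where
  "zset f = {(a, b). eval2 f a b = 0}"

definition plane_curve :: "(real \<times> real) set \<Rightarrow> bool" where
  "plane_curve C \<longleftrightarrow> infinite C \<and> (\<exists>f. f \<noteq> 0 \<and> C = zset f)"

definition curve_degree :: "(real \<times> real) set \<Rightarrow> nat" where
  "curve_degree C = (LEAST n. \<exists>f. f \<noteq> 0 \<and> C = zset f \<and> tdeg f = n)"

definition irreducible_curve :: "(real \<times> real) set \<Rightarrow> bool" where
  "irreducible_curve C \<longleftrightarrow> plane_curve C \<and> (\<exists>f. f \<noteq> 0 \<and> irreducible f \<and> C = zset f)"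

definition line_set :: "real \<Rightarrow> real \<Rightarrow> real \<Rightarrow> (real \<times> real) set" where
  "line_set a b c = {(x, y). a * x + b * y + c = 0}"

definition is_line :: "(real \<times> real) set \<Rightarrow> bool" where
  "is_line L \<longleftrightarrow> (\<exists>a b c. (a, b) \<noteq> (0, 0) \<and> L = line_set a b c)"

definition is_vertical_line :: "(real \<times> real) set \<Rightarrow> bool" where
  "is_vertical_line L \<longleftrightarrow> (\<exists>c. L = {(x, y). x = c})"

definition is_conic :: "(real \<times> real) set \<Rightarrow> bool" where
  "is_conic C \<longleftrightarrow> plane_curve C \<and> curve_degree C = 2 \<and>
     \<not> (\<exists>L1 L2. is_line L1 \<and> is_line L2 \<and> C = L1 \<union> L2)"

definition is_circle_with :: "(real \<times> real) set \<Rightarrow> real \<times> real \<Rightarrow> real \<Rightarrow> bool" where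
  "is_circle_with C c r \<longleftrightarrow> r > 0 \<and> C = sphere c r"

definition is_circle :: "(real \<times> real) set \<Rightarrow> bool" where
  "is_circle C \<longleftrightarrow> (\<exists>c r. is_circle_with C c r)"

text \<open>Reflection in the line a x + b y + c = 0 (assuming (a,b) \<noteq> (0,0)).\<close>
definition reflect :: "real \<Rightarrow> real \<Rightarrow> real \<Rightarrow> real \<times> real \<Rightarrow> real \<times> real" where
  "reflect a b c p = (let t = (a * fst p + b * snd p + c) / (a\<^sup>2 + b\<^sup>2)
                      in (fst p - 2 * a * t, snd p - 2 * b * t))"

definition circle_cond :: "(real \<times> real) set \<Rightarrow> (real \<times> real) set \<Rightarrow> bool" where
  "circle_cond C S \<longleftrightarrow> (\<forall>c r. is_circle_with C c r \<longrightarrow>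
      c \<notin> S \<and> (\<forall>r'>0. card (S \<inter> sphere c r') \<le> 1))"

text \<open>Conditions (5),(6): line C versus the point set S of the other curve.
  Lines parallel to a x + b y + c = 0 are a x + b y + c' = 0 (all c');
  lines orthogonal to it are b x - a y + c' = 0.\<close>
definition line_cond :: "(real \<times> real) set \<Rightarrow> (real \<times> real) set \<Rightarrow> bool" where
  "line_cond C S \<longleftrightarrow> (\<forall>a b c. (a, b) \<noteq> (0, 0) \<and> C = line_set a b c \<longrightarrow>
      (\<forall>c'. card (S \<inter> (line_set a b c' \<union> reflect a b c ` line_set a b c')) \<le> 1) \<and>
      (\<forall>c'. card (S \<inter> line_set b (- a) c') \<le> 1))"

text \<open>The set C_{ij} for points p = p_i, p' = p_j; elements (x,y,x',y') are
  encoded as ((x,y),(x',y')).\<close>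
definition Cpair :: "bipoly \<Rightarrow> real \<times> real \<Rightarrow> real \<times> real \<Rightarrow> ((real \<times> real) \<times> (real \<times> real)) set" where
  "Cpair f2 p p' = {((x, y), (x', y')).
      eval2 f2 x y = 0 \<and> eval2 f2 x' y' = 0 \<and>
      (x - fst p)\<^sup>2 + (y - snd p)\<^sup>2 = (x' - fst p')\<^sup>2 + (y' - snd p')\<^sup>2}"

end

theory Submission
  imports Defs "HOL-Computational_Algebra.Field_as_Ring"
begin

lemma eval2_alt: "eval2 f a b = poly (poly f [:b:]) a"
  unfolding eval2_def by (induction f) (auto simp: map_poly_pCons)

lemma eval2_add [simp]: "eval2 (f + g) a b = eval2 f a b + eval2 g a b"
  by (simp add: eval2_alt)
lemma eval2_diff [simp]: "eval2 (f - g) a b = eval2 f a b - eval2 g a b"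
  by (simp add: eval2_alt)
lemma eval2_minus [simp]: "eval2 (- f) a b = - eval2 f a b"
  by (simp add: eval2_alt)
lemma eval2_mult [simp]: "eval2 (f * g) a b = eval2 f a b * eval2 g a b"
  by (simp add: eval2_alt)
lemma eval2_const [simp]: "eval2 [:[:c:]:] a b = c"
  by (simp add: eval2_alt)
lemma eval2_1 [simp]: "eval2 1 a b = 1"
  using eval2_const[of 1 a b] by (simp add: one_pCons)
lemma eval2_power [simp]: "eval2 (f ^ n) a b = eval2 f a b ^ n"
  by (induction n) auto
lemma eval2_sum [simp]: "eval2 (sum F A) a b = (\<Sum>x\<in>A. eval2 (F x) a b)"
  by (induction A rule: infinite_finite_induct) (auto simp: eval2_alt)
lemma eval2_0 [simp]: "eval2 0 a b = 0"
  by (simp add: eval2_alt)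
lemma eval2_X [simp]: "eval2 [:[:0,1:]:] a b = a"
  by (simp add: eval2_alt)
lemma eval2_Y [simp]: "eval2 [:0,1:] a b = b"
  by (simp add: eval2_alt)
lemma eval2_lin: "eval2 [:[:c,p:],[:q:]:] a b = p*a + q*b + c"
  by (simp add: eval2_alt algebra_simps)

lemma poly_sum_bound:
  fixes p :: "real poly"
  assumes "degree p \<le> N" shows "poly p x = (\<Sum>i\<le>N. coeff p i * x ^ i)"
proof -
  have "poly p x = (\<Sum>i\<le>degree p. coeff p i * x ^ i)" by (rule poly_altdef)
  also have "\<dots> = (\<Sum>i\<le>N. coeff p i * x ^ i)"
    by (rule sum.mono_neutral_left) (use assms in \<open>auto simp: coeff_eq_0\<close>)
  finally show ?thesis .
qed

lemma eval2_sum_bound: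
  assumes "degree f \<le> N" shows "eval2 f a b = (\<Sum>i\<le>N. poly (coeff f i) a * b ^ i)"
proof -
  have "degree (map_poly (\<lambda>c. poly c a) f) \<le> N"
    using assms map_poly_degree_leq order_trans by blast
  then show ?thesis unfolding eval2_def by (subst poly_sum_bound) (auto simp: coeff_map_poly)
qed

lemma eval2_at0: "eval2 f a 0 = poly (coeff f 0) a"
  unfolding eval2_def by (simp add: poly_0_coeff_0 coeff_map_poly)

lemma eval2_unique:
  assumes "\<And>a b. eval2 f a b = eval2 g a b" shows "f = g"
proof (rule poly_eqI)
  fix i
  have "map_poly (\<lambda>c. poly c a) f = map_poly (\<lambda>c. poly c a) g" for a
    using assms unfolding eval2_def by (subst poly_eq_poly_eq_iff[symmetric]) auto
  then have "poly (coeff f i) a = poly (coeff g i) a" for a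
    by (metis coeff_map_poly poly_0)
  then show "coeff f i = coeff g i" by (subst poly_eq_poly_eq_iff[symmetric]) auto
qed

lemma tdeg_set_finite:
  "finite ({0} \<union> {degree (coeff f i) + i | i. i \<le> degree f \<and> coeff f i \<noteq> 0})"
proof -
  have "{degree (coeff f i) + i | i. i \<le> degree f \<and> coeff f i \<noteq> 0} \<subseteq> (\<lambda>i. degree (coeff f i) + i) ` {..degree f}"
    by auto
  then show ?thesis using finite_subset by auto
qed

lemma tdeg_ge:
  assumes "coeff (coeff f i) k \<noteq> 0" shows "k + i \<le> tdeg f"
proof -
  have ci: "coeff f i \<noteq> 0" using assms by auto
  then have "i \<le> degree f" by (simp add: le_degree)
  moreover have "k \<le> degree (coeff f i)" using assms by (simp add: le_degree)
  moreover have "degree (coeff f i) + i \<le> tdeg f"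
    unfolding tdeg_def using ci \<open>i \<le> degree f\<close>
    by (intro Max_ge[OF tdeg_set_finite]) auto
  ultimately show ?thesis by linarith
qed

lemma degree_coeff_le_tdeg:
  "degree (coeff f i) + i \<le> tdeg f \<or> coeff f i = 0"
proof (cases "coeff f i = 0")
  case False
  then have "coeff (coeff f i) (degree (coeff f i)) \<noteq> 0" by simp
  then show ?thesis using tdeg_ge by blast
qed simp

lemma degree_le_tdeg: "degree f \<le> tdeg f"
proof (cases "f = 0")
  case False
  then have "coeff f (degree f) \<noteq> 0" by simp
  then show ?thesis using degree_coeff_le_tdeg[of f "degree f"] by auto
qed simp

lemma degree_coeff_le_tdeg': "degree (coeff f i) \<le> tdeg f"
  using degree_coeff_le_tdeg[of f i] by auto

lemma tdeg_witness:
  assumes "f \<noteq> 0"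
  shows "\<exists>i. coeff f i \<noteq> 0 \<and> degree (coeff f i) + i = tdeg f"
proof -
  let ?S = "{degree (coeff f i) + i | i. i \<le> degree f \<and> coeff f i \<noteq> 0}"
  have ne: "?S \<noteq> {}" using assms by auto
  have "tdeg f \<in> {0} \<union> ?S" unfolding tdeg_def by (rule Max_in[OF tdeg_set_finite]) auto
  then show ?thesis
  proof
    assume "tdeg f \<in> {0}"
    then have t0: "tdeg f = 0" by simp
    have "coeff f (degree f) \<noteq> 0" using assms by simp
    moreover have "degree (coeff f (degree f)) + degree f \<le> tdeg f"
      using degree_coeff_le_tdeg[of f "degree f"] assms by simp
    ultimately show ?thesis using t0 by (metis le_zero_eq)
  qed auto
qed

lemma tdeg_0 [simp]: "tdeg 0 = 0"
  unfolding tdeg_def by simp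

definition psi :: "bipoly \<Rightarrow> bipoly" where
  "psi f = (\<Sum>n\<le>tdeg f. monom (\<Sum>i\<le>n. monom (coeff (coeff f i) (n - i)) i) n)"

lemma coeff_psi:
  "coeff (coeff (psi f) n) i = (if i \<le> n then coeff (coeff f i) (n - i) else 0)"
proof (cases "n \<le> tdeg f")
  case True
  then show ?thesis
    unfolding psi_def by (simp add: coeff_sum coeff_monom)
next
  case False
  have "coeff (coeff f i) (n - i) = 0" if "i \<le> n"
    using tdeg_ge[of f i "n - i"] False that by auto
  then show ?thesis using False
    unfolding psi_def by (simp add: coeff_sum coeff_monom)
qed

lemma degree_coeff_psi: "degree (coeff (psi f) n) \<le> n"
  by (rule degree_le) (simp add: coeff_psi)

lemma degree_psi_le: "degree (psi f) \<le> tdeg f"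
proof (rule degree_le, intro allI impI)
  fix n assume n: "tdeg f < n"
  have z: "coeff (coeff f i) (n - i) = 0" if "i \<le> n" for i
    by (rule ccontr) (use tdeg_ge[of f i "n-i"] n that in auto)
  have "coeff (coeff (psi f) n) i = 0" for i
    using z by (simp add: coeff_psi)
  then show "coeff (psi f) n = 0" by (simp add: poly_eq_iff)
qed

lemma psi_top:
  assumes "f \<noteq> 0" shows "coeff (psi f) (tdeg f) \<noteq> 0"
proof -
  obtain i where i: "coeff f i \<noteq> 0" "degree (coeff f i) + i = tdeg f"
    using tdeg_witness[OF assms] by blast
  have e: "tdeg f - i = degree (coeff f i)" using i(2) by simp
  have "coeff (coeff (psi f) (tdeg f)) i = coeff (coeff f i) (degree (coeff f i))"
    using i e by (simp add: coeff_psi)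
  also have "\<dots> \<noteq> 0" using i by simp
  finally show ?thesis by auto
qed

lemma degree_psi: "degree (psi f) = tdeg f"
proof (cases "f = 0")
  case True
  then show ?thesis using degree_psi_le[of f] by simp
next
  case False
  show ?thesis using degree_psi_le[of f] psi_top[OF False] le_degree by (metis antisym)
qed

lemma psi_nonzero: "f \<noteq> 0 \<Longrightarrow> psi f \<noteq> 0"
  using psi_top by force

lemma eval2_psi: "eval2 (psi f) m l = eval2 f l (l * m)"
proof -
  define D where "D = tdeg f"
  define G where "G = (\<lambda>i j. coeff (coeff f i) j * m ^ i * l ^ (i + j))"
  have "eval2 (psi f) m l = (\<Sum>n\<le>D. poly (coeff (psi f) n) m * l ^ n)"
    by (rule eval2_sum_bound) (simp add: D_def degree_psi)
  also have "\<dots> = (\<Sum>n\<le>D. \<Sum>i\<le>n. G i (n - i))"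
  proof (rule sum.cong[OF refl])
    fix n assume "n \<in> {..D}"
    have "poly (coeff (psi f) n) m = (\<Sum>i\<le>n. coeff (coeff (psi f) n) i * m ^ i)"
      by (rule poly_sum_bound) (rule degree_coeff_psi)
    also have "\<dots> = (\<Sum>i\<le>n. coeff (coeff f i) (n - i) * m ^ i)"
      by (rule sum.cong) (auto simp: coeff_psi)
    also have "\<dots> * l ^ n = (\<Sum>i\<le>n. G i (n - i))"
      unfolding sum_distrib_right G_def
      by (rule sum.cong[OF refl]) (simp add: mult.assoc)
    finally show "poly (coeff (psi f) n) m * l ^ n = (\<Sum>i\<le>n. G i (n - i))" by simp
  qed
  also have "\<dots> = (\<Sum>(i,j)\<in>{(i,j). i + j \<le> D}. G i j)"
    by (rule sum.triangle_reindex_eq[symmetric])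
  also have "\<dots> = (\<Sum>(i,j)\<in>{..D} \<times> {..D}. G i j)"
  proof (rule sum.mono_neutral_left)
    show "\<forall>x\<in>{..D} \<times> {..D} - {(i, j). i + j \<le> D}. (case x of (i, j) \<Rightarrow> G i j) = 0"
    proof
      fix x assume x: "x \<in> {..D} \<times> {..D} - {(i, j). i + j \<le> D}"
      obtain i j where ij: "x = (i, j)" by (cases x)
      have "\<not> i + j \<le> D" using x ij by auto
      then have "coeff (coeff f i) j = 0" using tdeg_ge[of f i j] unfolding D_def by (auto simp: add.commute)
      then show "(case x of (i, j) \<Rightarrow> G i j) = 0" using ij by (simp add: G_def)
    qed
  qed auto
  also have "\<dots> = (\<Sum>i\<le>D. \<Sum>j\<le>D. G i j)"
    by (rule sum.cartesian_product[symmetric])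
  also have "\<dots> = (\<Sum>i\<le>D. poly (coeff f i) l * (l * m) ^ i)"
  proof (rule sum.cong[OF refl])
    fix i assume "i \<in> {..D}"
    have "poly (coeff f i) l = (\<Sum>j\<le>D. coeff (coeff f i) j * l ^ j)"
      by (rule poly_sum_bound) (simp add: D_def degree_coeff_le_tdeg')
    then show "(\<Sum>j\<le>D. G i j) = poly (coeff f i) l * (l * m) ^ i"
      by (simp add: G_def sum_distrib_left sum_distrib_right power_add power_mult_distrib mult_ac)
  qed
  also have "\<dots> = eval2 f l (l * m)"
    by (rule eval2_sum_bound[symmetric]) (simp add: D_def degree_le_tdeg)
  finally show ?thesis .
qed

lemma psi_mult: "psi (f * g) = psi f * psi g"
  by (rule eval2_unique) (simp add: eval2_psi)
lemma psi_add: "psi (f + g) = psi f + psi g"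
  by (rule eval2_unique) (simp add: eval2_psi)
lemma psi_diff: "psi (f - g) = psi f - psi g"
  by (rule eval2_unique) (simp add: eval2_psi)
lemma psi_uminus: "psi (- f) = - psi f"
  by (rule eval2_unique) (simp add: eval2_psi)

lemma tdeg_mult: assumes "f \<noteq> 0" "g \<noteq> 0" shows "tdeg (f * g) = tdeg f + tdeg g"
proof -
  have "tdeg (f * g) = degree (psi f * psi g)" by (simp only: degree_psi[symmetric] psi_mult)
  also have "\<dots> = degree (psi f) + degree (psi g)"
    by (rule degree_mult_eq) (use assms psi_nonzero in auto)
  finally show ?thesis by (simp only: degree_psi)
qed
lemma tdeg_mult_le: "tdeg (f * g) \<le> tdeg f + tdeg g"
proof -
  have "tdeg (f * g) = degree (psi f * psi g)" by (simp only: degree_psi[symmetric] psi_mult)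
  also have "\<dots> \<le> degree (psi f) + degree (psi g)" by (rule degree_mult_le)
  finally show ?thesis by (simp only: degree_psi)
qed
lemma tdeg_add_le: "tdeg (f + g) \<le> max (tdeg f) (tdeg g)"
proof -
  have "tdeg (f + g) = degree (psi f + psi g)" by (simp only: degree_psi[symmetric] psi_add)
  also have "\<dots> \<le> max (degree (psi f)) (degree (psi g))" by (rule degree_add_le_max)
  finally show ?thesis by (simp only: degree_psi)
qed
lemma tdeg_diff_le: "tdeg (f - g) \<le> max (tdeg f) (tdeg g)"
proof -
  have "tdeg (f - g) = degree (psi f - psi g)" by (simp only: degree_psi[symmetric] psi_diff)
  also have "\<dots> \<le> max (degree (psi f)) (degree (psi g))" by (rule degree_diff_le_max)
  finally show ?thesis by (simp only: degree_psi)
qed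
lemma tdeg_uminus [simp]: "tdeg (- f) = tdeg f"
proof -
  have "tdeg (- f) = degree (- psi f)" by (simp only: degree_psi[symmetric] psi_uminus)
  then show ?thesis by (simp only: degree_minus degree_psi)
qed

lemma tdeg_const [simp]: "tdeg [:[:c:]:] = 0"
proof -
  have "coeff (coeff [:[:c:]:] i) k = 0" if "0 < k + i" for i k
    using that by (cases i; cases k) auto
  then have "psi [:[:c:]:] = monom (monom c 0) 0 \<or> True" by simp
  have "degree (psi [:[:c:]:]) \<le> 0"
  proof (rule degree_le, intro allI impI)
    fix n :: nat assume "0 < n"
    have "coeff (coeff (psi [:[:c:]:]) n) i = 0" for i
      using \<open>0 < n\<close> by (cases i; cases "n - i") (auto simp: coeff_psi)
    then show "coeff (psi [:[:c:]:]) n = 0" by (simp add: poly_eq_iff)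
  qed
  then show ?thesis by (simp add: degree_psi)
qed

lemma tdeg_1 [simp]: "tdeg 1 = 0"
  using tdeg_const[of 1] by (simp add: one_pCons)

lemma tdeg_power_le: "tdeg (f ^ n) \<le> n * tdeg f"
proof (induction n)
  case (Suc n)
  then show ?case using tdeg_mult_le[of f "f ^ n"] by simp
qed simp


lemma tdeg_leI:
  assumes "\<And>i k. coeff (coeff f i) k \<noteq> 0 \<Longrightarrow> k + i \<le> N" shows "tdeg f \<le> N"
proof -
  have "degree (psi f) \<le> N"
  proof (rule degree_le, intro allI impI)
    fix n assume n: "N < n"
    have "coeff (coeff (psi f) n) i = 0" for i
    proof (cases "i \<le> n")
      case True
      show ?thesis
      proof (rule ccontr)
        assume "coeff (coeff (psi f) n) i \<noteq> 0"
        then have "coeff (coeff f i) (n - i) \<noteq> 0" using True by (simp add: coeff_psi)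
        then have "n - i + i \<le> N" by (rule assms)
        then show False using True n by simp
      qed
    qed (simp add: coeff_psi)
    then show "coeff (psi f) n = 0" by (simp add: poly_eq_iff)
  qed
  then show ?thesis by (simp add: degree_psi)
qed

lemma tdeg_lin: "tdeg [:[:c, a:], [:b:]:] \<le> 1"
proof (rule tdeg_leI)
  fix i k assume "coeff (coeff [:[:c, a:], [:b:]:] i) k \<noteq> 0"
  then show "k + i \<le> 1"
    by (cases i; cases k) (auto simp: coeff_pCons split: nat.splits)
qed

lemma tdeg_le1_shape:
  assumes "tdeg f \<le> 1"
  shows "f = [:[:coeff (coeff f 0) 0, coeff (coeff f 0) 1:], [:coeff (coeff f 1) 0:]:]"
proof (rule poly_eqI)
  fix i
  show "coeff f i = coeff [:[:coeff (coeff f 0) 0, coeff (coeff f 0) 1:], [:coeff (coeff f 1) 0:]:] i"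
  proof (rule poly_eqI)
    fix k
    have z: "coeff (coeff f i) k = 0" if "1 < k + i"
      using tdeg_ge[of f i k] assms that by (cases "coeff (coeff f i) k = 0") auto
    show "coeff (coeff f i) k = coeff (coeff [:[:coeff (coeff f 0) 0, coeff (coeff f 0) 1:], [:coeff (coeff f 1) 0:]:] i) k"
    proof (cases "k + i \<le> 1")
      case True
      then consider "i = 0" "k = 0" | "i = 0" "k = 1" | "i = 1" "k = 0" by linarith
      then show ?thesis by cases (auto simp: coeff_pCons)
    next
      case False
      then show ?thesis using z
        by (cases i; cases k) (auto simp: coeff_pCons split: nat.splits)
    qed
  qed
qed

lemma tdeg0_shape:
  assumes "tdeg f = 0" shows "f = [:[:coeff (coeff f 0) 0:]:]"
proof -
  have f: "f = [:[:coeff (coeff f 0) 0, coeff (coeff f 0) 1:], [:coeff (coeff f 1) 0:]:]"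
    using tdeg_le1_shape assms by simp
  have "coeff (coeff f 0) 1 = 0" using tdeg_ge[of f 0 1] assms by (cases "coeff (coeff f 0) 1 = 0") auto
  moreover have "coeff (coeff f 1) 0 = 0" using tdeg_ge[of f 1 0] assms by (cases "coeff (coeff f 1) 0 = 0") auto
  ultimately show ?thesis using f by (metis pCons_0_0)
qed

lemma tdeg0_unit: assumes "tdeg f = 0" "f \<noteq> 0" shows "is_unit f"
proof -
  obtain c where c: "f = [:[:c:]:]" using tdeg0_shape[OF assms(1)] by blast
  then have "c \<noteq> 0" using assms by auto
  then show ?thesis using c by (simp add: is_unit_const_poly_iff dvd_field_iff)
qed

lemma unit_tdeg0: assumes "is_unit f" shows "tdeg f = 0"
proof -
  obtain g where g: "1 = f * g" using assms by (auto elim: dvdE)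
  then have "f \<noteq> 0" "g \<noteq> 0" by auto
  then have "tdeg f + tdeg g = 0" using tdeg_mult g by (metis tdeg_1)
  then show ?thesis by simp
qed

lemma tdeg1_irreducible: assumes "tdeg f = 1" shows "irreducible f"
proof (rule irreducibleI)
  show "f \<noteq> 0" using assms by (metis tdeg_0 zero_neq_one)
  show "\<not> is_unit f" using assms unit_tdeg0 by fastforce
  fix a b assume ab: "f = a * b"
  then have "a \<noteq> 0" "b \<noteq> 0" using \<open>f \<noteq> 0\<close> by auto
  then have "tdeg a + tdeg b = 1" using tdeg_mult ab assms by metis
  then have "tdeg a = 0 \<or> tdeg b = 0" by linarith
  then show "is_unit a \<or> is_unit b" using tdeg0_unit \<open>a \<noteq> 0\<close> \<open>b \<noteq> 0\<close> by blast
qed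

lemma zset_lin: "zset [:[:c, a:], [:b:]:] = line_set a b c"
  unfolding zset_def line_set_def by (auto simp: eval2_lin)

lemma tdeg_lin_eq: assumes "(a, b) \<noteq> (0, 0)" shows "tdeg [:[:c, a:], [:b:]:] = 1"
proof -
  have "tdeg [:[:c, a:], [:b:]:] \<noteq> 0"
  proof
    assume "tdeg [:[:c, a:], [:b:]:] = 0"
    from tdeg0_shape[OF this] have "[:[:c, a:], [:b:]:] = [:[:c:]:]" by simp
    then show False using assms by simp
  qed
  then show ?thesis using tdeg_lin[of c a b] by linarith
qed

definition PE :: "real \<Rightarrow> real \<Rightarrow> real poly \<Rightarrow> real poly \<Rightarrow> nat \<Rightarrow> (real \<Rightarrow> real \<Rightarrow> real) \<Rightarrow> bool" where
  "PE x0 y0 a b d F \<longleftrightarrow> (\<exists>H. degree H \<le> d \<and> (\<forall>j. degree (coeff H j) \<le> j) \<and>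
      (\<forall>l m. F (x0 + l * poly a m) (y0 + l * poly b m) = eval2 H m l))"

lemma PE_const: "PE x0 y0 a b 0 (\<lambda>x y. c)"
  unfolding PE_def by (intro exI[of _ "[:[:c:]:]"]) (auto simp: coeff_pCons split: nat.splits)

lemma PE_x: assumes "degree a \<le> 1" shows "PE x0 y0 a b 1 (\<lambda>x y. x)"
  unfolding PE_def
proof (intro exI[of _ "[:[:x0:], a:]"] conjI allI)
  fix j show "degree (coeff [:[:x0:], a:] j) \<le> j"
    using assms by (cases j) (auto simp: coeff_pCons split: nat.splits)
qed (auto simp: eval2_alt)

lemma PE_y: assumes "degree b \<le> 1" shows "PE x0 y0 a b 1 (\<lambda>x y. y)"
  unfolding PE_def
proof (intro exI[of _ "[:[:y0:], b:]"] conjI allI)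
  fix j show "degree (coeff [:[:y0:], b:] j) \<le> j"
    using assms by (cases j) (auto simp: coeff_pCons split: nat.splits)
qed (auto simp: eval2_alt)

lemma PE_mono: "PE x0 y0 a b d F \<Longrightarrow> d \<le> d' \<Longrightarrow> PE x0 y0 a b d' F"
  unfolding PE_def by (meson order_trans)

lemma PE_add: assumes "PE x0 y0 a b d F" "PE x0 y0 a b d G"
  shows "PE x0 y0 a b d (\<lambda>x y. F x y + G x y)"
proof -
  obtain H1 where H1: "degree H1 \<le> d" "\<forall>j. degree (coeff H1 j) \<le> j"
     "\<forall>l m. F (x0 + l * poly a m) (y0 + l * poly b m) = eval2 H1 m l"
    using assms(1) unfolding PE_def by blast
  obtain H2 where H2: "degree H2 \<le> d" "\<forall>j. degree (coeff H2 j) \<le> j"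
     "\<forall>l m. G (x0 + l * poly a m) (y0 + l * poly b m) = eval2 H2 m l"
    using assms(2) unfolding PE_def by blast
  show ?thesis unfolding PE_def
  proof (intro exI[of _ "H1 + H2"] conjI allI)
    show "degree (H1 + H2) \<le> d" by (rule degree_add_le) (use H1 H2 in auto)
    fix j show "degree (coeff (H1 + H2) j) \<le> j"
      unfolding coeff_add by (rule degree_add_le) (use H1 H2 in auto)
  qed (use H1 H2 in simp)
qed

lemma PE_mult: assumes "PE x0 y0 a b d1 F" "PE x0 y0 a b d2 G"
  shows "PE x0 y0 a b (d1 + d2) (\<lambda>x y. F x y * G x y)"
proof -
  obtain H1 where H1: "degree H1 \<le> d1" "\<forall>j. degree (coeff H1 j) \<le> j"
     "\<forall>l m. F (x0 + l * poly a m) (y0 + l * poly b m) = eval2 H1 m l"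
    using assms(1) unfolding PE_def by blast
  obtain H2 where H2: "degree H2 \<le> d2" "\<forall>j. degree (coeff H2 j) \<le> j"
     "\<forall>l m. G (x0 + l * poly a m) (y0 + l * poly b m) = eval2 H2 m l"
    using assms(2) unfolding PE_def by blast
  show ?thesis unfolding PE_def
  proof (intro exI[of _ "H1 * H2"] conjI allI)
    show "degree (H1 * H2) \<le> d1 + d2" by (rule order_trans[OF degree_mult_le], rule add_mono) (use H1 H2 in auto)
    fix j show "degree (coeff (H1 * H2) j) \<le> j"
      unfolding coeff_mult
    proof (rule degree_sum_le)
      fix i assume "i \<in> {..j}"
      then have "i \<le> j" by simp
      moreover have "degree (coeff H1 i) \<le> i" "degree (coeff H2 (j - i)) \<le> j - i"
        using H1(2) H2(2) by auto
      ultimately have "degree (coeff H1 i) + degree (coeff H2 (j - i)) \<le> j" by linarith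
      then show "degree (coeff H1 i * coeff H2 (j - i)) \<le> j"
        by (rule order_trans[OF degree_mult_le])
    qed simp
  qed (use H1 H2 in simp)
qed

lemma PE_sum: assumes "finite A" "\<And>i. i \<in> A \<Longrightarrow> PE x0 y0 a b d (F i)"
  shows "PE x0 y0 a b d (\<lambda>x y. \<Sum>i\<in>A. F i x y)"
  using assms
proof (induction A rule: finite_induct)
  case empty
  then show ?case using PE_mono[OF PE_const[of x0 y0 a b 0]] by simp
next
  case (insert i A)
  then show ?case using PE_add[of x0 y0 a b d "F i" "\<lambda>x y. \<Sum>i\<in>A. F i x y"] by simp
qed

lemma PE_power: assumes "PE x0 y0 a b d F"
  shows "PE x0 y0 a b (n * d) (\<lambda>x y. F x y ^ n)"
proof (induction n)
  case 0
  then show ?case using PE_const[of x0 y0 a b 1] by simp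
next
  case (Suc n)
  then show ?case using PE_mult[OF assms Suc] by (simp add: add.commute)
qed

lemma PE_eval2: assumes "degree a \<le> 1" "degree b \<le> 1"
  shows "PE x0 y0 a b (tdeg f) (eval2 f)"
proof -
  define D where "D = tdeg f"
  have e: "eval2 f x y = (\<Sum>i\<le>D. \<Sum>k\<le>D. coeff (coeff f i) k * x ^ k * y ^ i)" for x y
  proof -
    have "eval2 f x y = (\<Sum>i\<le>D. poly (coeff f i) x * y ^ i)"
      by (rule eval2_sum_bound) (simp add: D_def degree_le_tdeg)
    also have "\<dots> = (\<Sum>i\<le>D. \<Sum>k\<le>D. coeff (coeff f i) k * x ^ k * y ^ i)"
    proof (rule sum.cong[OF refl])
      fix i
      have "poly (coeff f i) x = (\<Sum>k\<le>D. coeff (coeff f i) k * x ^ k)"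
        by (rule poly_sum_bound) (simp add: D_def degree_coeff_le_tdeg')
      then show "poly (coeff f i) x * y ^ i = (\<Sum>k\<le>D. coeff (coeff f i) k * x ^ k * y ^ i)"
        by (simp add: sum_distrib_right)
    qed
    finally show ?thesis .
  qed
  have tm: "PE x0 y0 a b D (\<lambda>x y. coeff (coeff f i) k * x ^ k * y ^ i)" for i k
  proof (cases "coeff (coeff f i) k = 0")
    case True
    then show ?thesis using PE_mono[OF PE_const[of x0 y0 a b 0]] by simp
  next
    case False
    then have le: "k + i \<le> D" using tdeg_ge D_def by blast
    have "PE x0 y0 a b (0 + k * 1 + i * 1) (\<lambda>x y. coeff (coeff f i) k * x ^ k * y ^ i)"
      by (intro PE_mult PE_const PE_power PE_x PE_y assms)
    then show ?thesis using le PE_mono by simp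
  qed
  have "PE x0 y0 a b D (\<lambda>x y. \<Sum>i\<le>D. \<Sum>k\<le>D. coeff (coeff f i) k * x ^ k * y ^ i)"
    by (intro PE_sum tm) auto
  moreover have "eval2 f = (\<lambda>x y. \<Sum>i\<le>D. \<Sum>k\<le>D. coeff (coeff f i) k * x ^ k * y ^ i)"
    by (intro ext) (rule e)
  ultimately show ?thesis unfolding D_def by simp
qed

lemma PE_expand:
  assumes "PE x0 y0 a b d F"
  obtains h where "\<And>j. degree (h j) \<le> j"
    "\<And>l m. F (x0 + l * poly a m) (y0 + l * poly b m) = (\<Sum>j\<le>d. poly (h j) m * l ^ j)"
proof -
  obtain H where H: "degree H \<le> d" "\<forall>j. degree (coeff H j) \<le> j"
     "\<forall>l m. F (x0 + l * poly a m) (y0 + l * poly b m) = eval2 H m l"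
    using assms unfolding PE_def by blast
  show ?thesis
    by (rule that[of "coeff H"]) (use H in \<open>auto simp: eval2_sum_bound\<close>)
qed

lemma field_poly_bezout:
  fixes F G :: "'a::field poly"
  assumes irr: "irreducible F" and nd: "\<not> F dvd G"
  shows "\<exists>U V. U * F + V * G = 1"
proof -
  define I where "I = {U * F + V * G | U V. True}"
  have FI: "F \<in> I" unfolding I_def by (rule CollectI, rule exI[of _ 1], rule exI[of _ 0]) simp
  have F0: "F \<noteq> 0" using irr by auto
  define n where "n = (LEAST n. \<exists>h\<in>I. h \<noteq> 0 \<and> degree h = n)"
  have ex: "\<exists>h\<in>I. h \<noteq> 0 \<and> degree h = degree F" using FI F0 by blast
  obtain h where h: "h \<in> I" "h \<noteq> 0" "degree h = n"
    using LeastI_ex[of "\<lambda>n. \<exists>h\<in>I. h \<noteq> 0 \<and> degree h = n"] ex unfolding n_def by blast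
  have minimal: "n \<le> degree h'" if "h' \<in> I" "h' \<noteq> 0" for h'
    unfolding n_def using that by (intro Least_le) blast
  have closed: "A - Q * h \<in> I" if "A \<in> I" for A Q
  proof -
    obtain U V where A: "A = U * F + V * G" using \<open>A \<in> I\<close> unfolding I_def by blast
    obtain U' V' where H: "h = U' * F + V' * G" using h(1) unfolding I_def by blast
    have "A - Q * h = (U - Q * U') * F + (V - Q * V') * G"
      unfolding A H by (simp add: algebra_simps)
    then show ?thesis unfolding I_def by blast
  qed
  have divides: "h dvd A" if "A \<in> I" for A
  proof (rule ccontr)
    assume nd': "\<not> h dvd A"
    then have m0: "A mod h \<noteq> 0" by (simp add: mod_eq_0_iff_dvd)
    have "A mod h = A - (A div h) * h" by (simp add: minus_div_mult_eq_mod)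
    then have "A mod h \<in> I" using closed[OF that] by simp
    then have "n \<le> degree (A mod h)" using minimal m0 by blast
    moreover have "degree (A mod h) < degree h" using degree_mod_less'[OF h(2) m0] .
    ultimately show False using h(3) by simp
  qed
  have GI: "G \<in> I" unfolding I_def by (rule CollectI, rule exI[of _ 0], rule exI[of _ 1]) simp
  have hF: "h dvd F" using divides FI .
  have hG: "h dvd G" using divides GI .
  obtain k where k: "F = h * k" using hF by (auto elim: dvdE)
  have "is_unit h \<or> is_unit k" using irreducibleD[OF irr k] .
  moreover have "\<not> is_unit k"
  proof
    assume "is_unit k"
    then have "F dvd h" using k by (metis dvd_mult_unit_iff dvd_refl)
    then show False using hG nd dvd_trans by blast
  qed
  ultimately have "is_unit h" by blast
  then obtain h' where h': "1 = h * h'" by (auto elim: dvdE)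
  obtain U V where H: "h = U * F + V * G" using h(1) unfolding I_def by blast
  have "(h' * U) * F + (h' * V) * G = 1" using h' H by (simp add: algebra_simps)
  then show ?thesis by blast
qed

lemma clear_denom:
  fixes U :: "'a::{factorial_ring_gcd,semiring_gcd_mult_normalize} fract poly"
  shows "\<exists>d U'. d \<noteq> 0 \<and> smult (to_fract d) U = fract_poly U'"
proof -
  obtain c U'' where U: "U = smult c (fract_poly U'')" by (rule content_decompose_fract[of U])
  obtain a b where ab: "c = Fract a b" "b \<noteq> 0" by (cases c) auto
  have "smult (to_fract b) U = fract_poly (smult a U'')"
    using ab by (simp add: U Fract_conv_to_fract)
  then show ?thesis using ab by blast
qed

lemma bipoly_bezout:
  fixes f g :: bipoly
  assumes irr: "irreducible f" and deg: "degree f \<noteq> 0" and nd: "\<not> f dvd g"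
  shows "\<exists>A B D. D \<noteq> 0 \<and> A * f + B * g = [:D:]"
proof -
  have irrF: "irreducible (fract_poly f)" and cont: "content f = 1"
    using nonconst_poly_irreducible_iff[OF deg] irr by auto
  have ndF: "\<not> fract_poly f dvd fract_poly g"
    using fract_poly_dvdD[OF _ cont] nd by blast
  obtain U V where UV: "U * fract_poly f + V * fract_poly g = 1"
    using field_poly_bezout[OF irrF ndF] by blast
  obtain dU U' where U': "dU \<noteq> 0" "smult (to_fract dU) U = fract_poly U'" using clear_denom by blast
  obtain dV V' where V': "dV \<noteq> 0" "smult (to_fract dV) V = fract_poly V'" using clear_denom by blast
  have "fract_poly (smult dV U' * f + smult dU V' * g) =
        smult (to_fract dV) (fract_poly U') * fract_poly f + smult (to_fract dU) (fract_poly V') * fract_poly g"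
    by simp
  also have "\<dots> = smult (to_fract (dU * dV)) (U * fract_poly f + V * fract_poly g)"
    unfolding U'(2)[symmetric] V'(2)[symmetric] by (simp add: algebra_simps smult_add_right)
  also have "\<dots> = fract_poly [:dU * dV:]" using UV by (simp add: map_poly_pCons)
  finally have "smult dV U' * f + smult dU V' * g = [:dU * dV:]" by (simp only: fract_poly_eq_iff)
  moreover have "dU * dV \<noteq> 0" using U' V' by simp
  ultimately show ?thesis by blast
qed

lemma eval2_constpoly: "eval2 [:D:] x y = poly D x"
  by (simp add: eval2_alt)

lemma fiber_dvd:
  assumes "\<And>y. eval2 f x0 y = 0" shows "[:[:- x0, 1:]:] dvd f"
proof -
  have "map_poly (\<lambda>c. poly c x0) f = 0"
    using assms unfolding eval2_def by (simp add: poly_all_0_iff_0[symmetric])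
  then have "poly (coeff f n) x0 = 0" for n by (metis coeff_0 coeff_map_poly poly_0)
  then have "[:- x0, 1:] dvd coeff f n" for n by (simp add: poly_eq_0_iff_dvd)
  then show ?thesis by (simp add: const_poly_dvd_iff)
qed

lemma fiber_finite:
  assumes "\<not> [:[:- x0, 1:]:] dvd f" shows "finite {y. eval2 f x0 y = 0}"
proof -
  have "map_poly (\<lambda>c. poly c x0) f \<noteq> 0"
  proof
    assume "map_poly (\<lambda>c. poly c x0) f = 0"
    then have "eval2 f x0 y = 0" for y unfolding eval2_def by simp
    then show False using fiber_dvd assms by blast
  qed
  then show ?thesis unfolding eval2_def by (rule poly_roots_finite)
qed

lemma CF:
  fixes f g :: bipoly
  assumes irr: "irreducible f" and nd: "\<not> f dvd g"
  shows "finite (zset f \<inter> zset g)"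
proof -
  let ?Z = "zset f \<inter> zset g"
  have f0: "f \<noteq> 0" using irr by auto
  have X: "finite (fst ` ?Z)"
  proof (cases "degree f = 0")
    case True
    then obtain c where c: "f = [:c:]" by (metis degree_eq_zeroE)
    then have "c \<noteq> 0" using f0 by auto
    have "fst ` ?Z \<subseteq> {x. poly c x = 0}"
      by (auto simp: zset_def c eval2_constpoly)
    then show ?thesis using poly_roots_finite[OF \<open>c \<noteq> 0\<close>] finite_subset by blast
  next
    case False
    obtain A B D where ABD: "D \<noteq> 0" "A * f + B * g = [:D:]" using bipoly_bezout[OF irr False nd] by blast
    have "fst ` ?Z \<subseteq> {x. poly D x = 0}"
    proof
      fix x assume "x \<in> fst ` ?Z"
      then obtain y where "(x, y) \<in> ?Z" by force
      then have "eval2 f x y = 0" "eval2 g x y = 0" by (auto simp: zset_def)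
      then have "eval2 (A * f + B * g) x y = 0" by simp
      then show "x \<in> {x. poly D x = 0}" using ABD(2) by (simp add: eval2_constpoly)
    qed
    then show ?thesis using poly_roots_finite[OF ABD(1)] finite_subset by blast
  qed
  have fib: "finite {y. (x0, y) \<in> ?Z}" for x0
  proof (cases "[:[:- x0, 1:]:] dvd f")
    case True
    have "\<not> [:[:- x0, 1:]:] dvd g"
    proof
      assume g: "[:[:- x0, 1:]:] dvd g"
      obtain k where k: "f = [:[:- x0, 1:]:] * k" using True by (auto elim: dvdE)
      have nu: "\<not> is_unit [:[:- x0, 1:]:]" by (simp add: is_unit_const_poly_iff is_unit_poly_iff)
      have "is_unit k" using irreducibleD[OF irr k] nu by blast
      then have "f dvd [:[:- x0, 1:]:]" using k by (metis dvd_mult_unit_iff dvd_refl)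
      then show False using g nd dvd_trans by blast
    qed
    then have "finite {y. eval2 g x0 y = 0}" by (rule fiber_finite)
    then show ?thesis by (rule finite_subset[rotated]) (auto simp: zset_def)
  next
    case False
    then have "finite {y. eval2 f x0 y = 0}" by (rule fiber_finite)
    then show ?thesis by (rule finite_subset[rotated]) (auto simp: zset_def)
  qed
  have "?Z \<subseteq> (\<Union>x0\<in>fst ` ?Z. (\<lambda>y. (x0, y)) ` {y. (x0, y) \<in> ?Z})" by force
  moreover have "finite (\<Union>x0\<in>fst ` ?Z. (\<lambda>y. (x0, y)) ` {y. (x0, y) \<in> ?Z})"
    using X fib by blast
  ultimately show ?thesis by (rule finite_subset)
qed

definition good :: "bipoly \<Rightarrow> bool" where
  "good f \<longleftrightarrow> irreducible f \<and> infinite (zset f) \<and> \<not> is_line (zset f) \<and>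
     \<not> is_conic (zset f) \<and> curve_degree (zset f) = tdeg f"

lemma good_nonzero: "good f \<Longrightarrow> f \<noteq> 0"
  unfolding good_def by auto

lemma zset_const: "c \<noteq> 0 \<Longrightarrow> zset [:[:c:]:] = {}"
  unfolding zset_def by simp

lemma good_tdeg: assumes "good f" shows "2 \<le> tdeg f"
proof (rule ccontr)
  assume "\<not> 2 \<le> tdeg f"
  then have le: "tdeg f \<le> 1" by simp
  define c a b where "c = coeff (coeff f 0) 0" "a = coeff (coeff f 0) 1" "b = coeff (coeff f 1) 0"
  have f: "f = [:[:c, a:], [:b:]:]" using tdeg_le1_shape[OF le] unfolding c_a_b_def .
  show False
  proof (cases "(a, b) = (0, 0)")
    case True
    then have "f = [:[:c:]:]" using f by simp
    moreover have "c \<noteq> 0" using good_nonzero[OF assms] True f by auto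
    ultimately show False using assms zset_const unfolding good_def by auto
  next
    case False
    then have "is_line (zset f)" unfolding is_line_def using f zset_lin by blast
    then show False using assms unfolding good_def by blast
  qed
qed

lemma good_line:
  assumes "good f" "(a, b) \<noteq> (0, 0)" "infinite (zset f \<inter> line_set a b c)"
  shows False
proof -
  let ?l = "[:[:c, a:], [:b:]:]"
  have t1: "tdeg ?l = 1" using tdeg_lin_eq[OF assms(2)] .
  have irr: "irreducible ?l" using tdeg1_irreducible[OF t1] .
  have "?l dvd f"
  proof (rule ccontr)
    assume "\<not> ?l dvd f"
    then have "finite (zset ?l \<inter> zset f)" using CF[OF irr] by blast
    then show False using assms(3) by (simp add: zset_lin Int_commute)
  qed
  then obtain k where k: "f = ?l * k" by (auto elim: dvdE)
  have "\<not> is_unit ?l" using t1 unit_tdeg0 by fastforce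
  then have "is_unit k" using irreducibleD[OF _ k] assms(1) unfolding good_def by blast
  then have "tdeg k = 0" by (rule unit_tdeg0)
  moreover have "k \<noteq> 0" using k good_nonzero[OF assms(1)] by auto
  moreover have "?l \<noteq> 0" using t1 by (metis tdeg_0 zero_neq_one)
  ultimately have "tdeg (?l * k) = 1" using tdeg_mult[of ?l k] t1 by simp
  then have "tdeg f = 1" using k by simp
  then show False using good_tdeg[OF assms(1)] by simp
qed

lemma good_nodvd:
  assumes "good f" "g \<noteq> 0" "tdeg g \<le> 2" shows "\<not> f dvd g"
proof
  assume "f dvd g"
  then obtain h where h: "g = f * h" by (auto elim: dvdE)
  have "h \<noteq> 0" using h assms(2) by auto
  then have "tdeg f \<le> 2" using tdeg_mult[OF good_nonzero[OF assms(1)]] h assms(3) by simp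
  then have t2: "tdeg f = 2" using good_tdeg[OF assms(1)] by simp
  have pc: "plane_curve (zset f)"
    unfolding plane_curve_def using assms(1) good_nonzero[OF assms(1)] unfolding good_def by blast
  have cd: "curve_degree (zset f) = 2" using assms(1) t2 unfolding good_def by simp
  have "\<exists>L1 L2. is_line L1 \<and> is_line L2 \<and> zset f = L1 \<union> L2"
    using assms(1) pc cd unfolding good_def is_conic_def by blast
  then obtain L1 L2 where L: "is_line L1" "is_line L2" "zset f = L1 \<union> L2" by blast
  have "infinite L1 \<or> infinite L2" using assms(1) L(3) unfolding good_def by auto
  then obtain L where "is_line L" "infinite L" "L \<subseteq> zset f" using L by blast
  then obtain a b c where abc: "(a, b) \<noteq> (0, 0)" "L = line_set a b c" unfolding is_line_def by blast
  have "infinite (zset f \<inter> line_set a b c)"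
    using \<open>infinite L\<close> \<open>L \<subseteq> zset f\<close> abc by (simp add: Int_absorb1)
  then show False using good_line[OF assms(1) abc(1)] by blast
qed

lemma good_finite:
  assumes "good f" "g \<noteq> 0" "tdeg g \<le> 2" shows "finite (zset f \<inter> zset g)"
  using CF good_nodvd assms unfolding good_def by blast

lemma poly_sum_monom: "poly (\<Sum>j\<le>D. monom (c j) j) l = (\<Sum>j\<le>D. c j * l ^ j)" for c :: "nat \<Rightarrow> real"
  by (simp add: poly_sum poly_monom)

lemma degree_sum_monom: "degree (\<Sum>j\<le>D. monom (c j) j) \<le> D"
  by (rule degree_sum_le) (auto intro: order_trans[OF degree_monom_le])

lemma line_param:
  fixes n a b c x y :: real
  assumes n0: "n \<noteq> 0" and nd: "n = a\<^sup>2 + b\<^sup>2" and lin: "a * x + b * y + c = 0"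
  shows "- a * c / n + (b * x - a * y) / n * b = x" "- b * c / n - (b * x - a * y) / n * a = y"
proof -
  have c: "c = - a * x - b * y" using lin by simp
  have e1: "- a * c + (b * x - a * y) * b = x * n" unfolding c nd by (simp add: power2_eq_square algebra_simps)
  have e2: "- b * c - (b * x - a * y) * a = y * n" unfolding c nd by (simp add: power2_eq_square algebra_simps)
  have "- a * c / n + (b * x - a * y) / n * b = (- a * c + (b * x - a * y) * b) / n"
    using n0 by (simp add: field_simps)
  then show "- a * c / n + (b * x - a * y) / n * b = x" using e1 n0 by simp
  have "- b * c / n - (b * x - a * y) / n * a = (- b * c - (b * x - a * y) * a) / n"
    using n0 by (simp add: field_simps)
  then show "- b * c / n - (b * x - a * y) / n * a = y" using e2 n0 by simp
qed

lemma line_base: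
  fixes n a b c :: real
  assumes n0: "n \<noteq> 0" and nd: "n = a\<^sup>2 + b\<^sup>2"
  shows "a * (- a * c / n) + b * (- b * c / n) = - c"
  using n0 apply (simp add: field_simps)
  apply (simp add: nd power2_eq_square algebra_simps)
  done

lemma good_line_card:
  assumes "good f" "(a, b) \<noteq> (0, 0)"
  shows "card (zset f \<inter> line_set a b c) \<le> tdeg f"
proof -
  define D where "D = tdeg f"
  define n where "n = a\<^sup>2 + b\<^sup>2"
  have n0: "n \<noteq> 0" using assms(2) unfolding n_def by (auto simp: sum_power2_eq_zero_iff)
  define x0 where "x0 = - a * c / n"
  define y0 where "y0 = - b * c / n"
  have "PE x0 y0 [:b:] [:- a:] D (eval2 f)" unfolding D_def by (rule PE_eval2) auto
  then obtain h where h: "\<And>l m. eval2 f (x0 + l * poly [:b:] m) (y0 + l * poly [:- a:] m) = (\<Sum>j\<le>D. poly (h j) m * l ^ j)"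
    by (rule PE_expand) blast
  define r where "r = (\<Sum>j\<le>D. monom (poly (h j) 0) j)"
  have r: "eval2 f (x0 + l * b) (y0 - l * a) = poly r l" for l
    using h[of l 0] unfolding r_def poly_sum_monom by simp
  have degr: "degree r \<le> D" unfolding r_def by (rule degree_sum_monom)
  define P where "P = (\<lambda>l. (x0 + l * b, y0 - l * a))"
  have base: "a * x0 + b * y0 = - c"
  proof -
    show ?thesis unfolding x0_def y0_def by (rule line_base[OF n0 n_def])
  qed
  have online: "P l \<in> line_set a b c" for l
  proof -
    have "a * (x0 + l * b) + b * (y0 - l * a) + c = a * x0 + b * y0 + c" by (simp add: algebra_simps)
    then show ?thesis unfolding P_def line_set_def using base by simp
  qed
  have injP: "inj P"
  proof (rule injI)
    fix l1 l2 assume "P l1 = P l2"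
    then have "l1 * b = l2 * b" "l1 * a = l2 * a" unfolding P_def by auto
    then show "l1 = l2" using assms(2) by auto
  qed
  have r0: "r \<noteq> 0"
  proof
    assume "r = 0"
    then have "P l \<in> zset f \<inter> line_set a b c" for l
      using online r[of l] unfolding zset_def P_def by auto
    then have "range P \<subseteq> zset f \<inter> line_set a b c" by auto
    moreover have "infinite (range P)" using injP finite_imageD infinite_UNIV_char_0 by blast
    ultimately show False using good_line[OF assms] finite_subset by blast
  qed
  have sub: "zset f \<inter> line_set a b c \<subseteq> P ` {l. poly r l = 0}"
  proof
    fix p assume p: "p \<in> zset f \<inter> line_set a b c"
    obtain x y where xy: "p = (x, y)" by (cases p)
    have lin: "a * x + b * y + c = 0" using p xy unfolding line_set_def by auto
    define l where "l = (b * x - a * y) / n"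
    have "P l = p" unfolding P_def xy l_def x0_def y0_def
      using line_param[OF n0 n_def lin] by simp
    moreover have "poly r l = 0" using r[of l] p \<open>P l = p\<close> unfolding P_def zset_def by auto
    ultimately show "p \<in> P ` {l. poly r l = 0}" by blast
  qed
  have "card (zset f \<inter> line_set a b c) \<le> card (P ` {l. poly r l = 0})"
    by (rule card_mono) (use sub poly_roots_finite[OF r0] in auto)
  also have "\<dots> \<le> card {l. poly r l = 0}" by (rule card_image_le) (use poly_roots_finite[OF r0] in auto)
  also have "\<dots> \<le> degree r" by (rule card_poly_roots_bound[OF r0])
  finally show ?thesis using degr D_def by simp
qed

lemma good_lin_card:
  assumes "good f" "h \<noteq> 0" "tdeg h \<le> 1"
  shows "card (zset f \<inter> zset h) \<le> tdeg f" "finite (zset f \<inter> zset h)"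
proof -
  define c a b where "c = coeff (coeff h 0) 0" "a = coeff (coeff h 0) 1" "b = coeff (coeff h 1) 0"
  have hs: "h = [:[:c, a:], [:b:]:]" using tdeg_le1_shape[OF assms(3)] unfolding c_a_b_def .
  have "card (zset f \<inter> zset h) \<le> tdeg f \<and> finite (zset f \<inter> zset h)"
  proof (cases "(a, b) = (0, 0)")
    case True
    then have "h = [:[:c:]:]" "c \<noteq> 0" using hs assms(2) by auto
    then show ?thesis using zset_const by simp
  next
    case False
    have "finite (zset f \<inter> zset h)" using good_finite[OF assms(1,2)] assms(3) by simp
    then show ?thesis using good_line_card[OF assms(1) False, of c] hs zset_lin by simp
  qed
  then show "card (zset f \<inter> zset h) \<le> tdeg f" "finite (zset f \<inter> zset h)" by auto
qed

lemma pencil_point: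
  fixes c dx dy l m :: real
  assumes B0: "dx + c * dy \<noteq> 0"
    and m: "m * (dx + c * dy) = dy - c * dx" and l: "l * (1 + c\<^sup>2) = dx + c * dy"
  shows "l * (1 - c * m) = dx" "l * (c + m) = dy" "l \<noteq> 0"
proof -
  have n: "1 + c\<^sup>2 \<noteq> 0" using zero_le_power2[of c] by linarith
  have "(l * (1 - c * m)) * (1 + c\<^sup>2) = (l * (1 + c\<^sup>2)) * (1 - c * m)" by (simp add: algebra_simps)
  also have "\<dots> = (dx + c * dy) - c * (m * (dx + c * dy))" unfolding l by (simp add: algebra_simps)
  also have "\<dots> = dx * (1 + c\<^sup>2)" unfolding m by (simp add: power2_eq_square algebra_simps)
  finally show "l * (1 - c * m) = dx" using n by simp
  have "(l * (c + m)) * (1 + c\<^sup>2) = (l * (1 + c\<^sup>2)) * (c + m)" by (simp add: algebra_simps)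
  also have "\<dots> = c * (dx + c * dy) + (m * (dx + c * dy))" unfolding l by (simp add: algebra_simps)
  also have "\<dots> = dy * (1 + c\<^sup>2)" unfolding m by (simp add: power2_eq_square algebra_simps)
  finally show "l * (c + m) = dy" using n by simp
  show "l \<noteq> 0" using l B0 by auto
qed

lemma pencil_inj:
  fixes c l l' m m' :: real
  assumes "l \<noteq> 0" "l * (1 - c * m) = l' * (1 - c * m')" "l * (c + m) = l' * (c + m')"
  shows "m = m'"
proof -
  have n: "1 + c\<^sup>2 \<noteq> 0" using zero_le_power2[of c] by linarith
  have "l * (1 - c * m) * (c + m') = l * (c + m) * (1 - c * m')"
    using assms(2,3) by (metis mult.commute mult.left_commute)
  then have "l * ((1 + c\<^sup>2) * (m' - m)) = 0" by (simp add: power2_eq_square algebra_simps)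
  then show ?thesis using assms(1) n by simp
qed

lemma sum_at0: "(\<Sum>j\<le>D. a j * (0::real) ^ j) = a 0"
  by (induction D) auto

lemma sum_le2: "(\<Sum>j\<le>2. a j * (l::real) ^ j) = a 0 + a 1 * l + a 2 * l\<^sup>2"
  by (simp add: numeral_2_eq_2)

lemma poly_deg1: "degree p \<le> 1 \<Longrightarrow> poly p m = coeff p 0 + coeff p 1 * (m::real)"
  by (subst poly_sum_bound[of p 1]) auto

lemma pp_eval:
  fixes k1 k2 :: "real poly" and h :: "nat \<Rightarrow> real poly"
  assumes "poly k2 m \<noteq> 0"
  shows "poly (\<Sum>j\<le>D. k2 ^ (D - j) * (- k1) ^ j * h j) m =
         poly k2 m ^ D * (\<Sum>j\<le>D. poly (h j) m * (- poly k1 m / poly k2 m) ^ j)"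
proof -
  have "poly (\<Sum>j\<le>D. k2 ^ (D - j) * (- k1) ^ j * h j) m =
        (\<Sum>j\<le>D. poly k2 m ^ (D - j) * (- poly k1 m) ^ j * poly (h j) m)"
    by (simp add: poly_sum)
  also have "\<dots> = (\<Sum>j\<le>D. poly k2 m ^ D * (poly (h j) m * (- poly k1 m / poly k2 m) ^ j))"
  proof (rule sum.cong[OF refl])
    fix j assume "j \<in> {..D}"
    then have jD: "j \<le> D" by simp
    have "poly k2 m ^ D = poly k2 m ^ (D - j) * poly k2 m ^ j"
      using jD by (simp add: power_add[symmetric])
    moreover have "(- poly k1 m / poly k2 m) ^ j * poly k2 m ^ j = (- poly k1 m) ^ j"
    proof -
      have "(- poly k1 m / poly k2 m) ^ j * poly k2 m ^ j = ((- poly k1 m / poly k2 m) * poly k2 m) ^ j"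
        by (rule power_mult_distrib[symmetric])
      also have "(- poly k1 m / poly k2 m) * poly k2 m = - poly k1 m" using assms by simp
      finally show ?thesis .
    qed
    ultimately show "poly k2 m ^ (D - j) * (- poly k1 m) ^ j * poly (h j) m =
        poly k2 m ^ D * (poly (h j) m * (- poly k1 m / poly k2 m) ^ j)"
      by (metis (no_types, lifting) mult.assoc mult.commute)
  qed
  also have "\<dots> = poly k2 m ^ D * (\<Sum>j\<le>D. poly (h j) m * (- poly k1 m / poly k2 m) ^ j)"
    by (simp add: sum_distrib_left)
  finally show ?thesis .
qed

lemma pp_degree:
  fixes k1 k2 :: "real poly" and h :: "nat \<Rightarrow> real poly"
  assumes "degree k1 \<le> e" "degree k2 \<le> 2" "\<And>j. degree (h j) \<le> j"
    and "\<And>j. j \<le> D \<Longrightarrow> (D - j) * 2 + j * e + j \<le> N"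
  shows "degree (\<Sum>j\<le>D. k2 ^ (D - j) * (- k1) ^ j * h j) \<le> N"
proof (rule degree_sum_le)
  fix j assume "j \<in> {..D}"
  then have jD: "j \<le> D" by simp
  have "degree (k2 ^ (D - j) * (- k1) ^ j * h j) \<le> degree (k2 ^ (D - j)) + degree ((- k1) ^ j) + degree (h j)"
    by (meson add_le_mono degree_mult_le le_refl order_trans)
  also have "\<dots> \<le> (D - j) * 2 + j * e + j"
  proof (intro add_mono)
    show "degree (k2 ^ (D - j)) \<le> (D - j) * 2"
    proof -
      have a: "degree (k2 ^ (D - j)) \<le> degree k2 * (D - j)" by (rule degree_power_le)
      have b: "degree k2 * (D - j) \<le> 2 * (D - j)" using assms(2) by (rule mult_le_mono1)
      from a b show ?thesis by linarith
    qed
    show "degree ((- k1) ^ j) \<le> j * e"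
    proof -
      have a: "degree ((- k1) ^ j) \<le> degree (- k1) * j" by (rule degree_power_le)
      have b: "degree (- k1) * j \<le> e * j" using assms(1) by (simp add: mult_le_mono1)
      from a b have "degree ((- k1) ^ j) \<le> e * j" by linarith
      then show ?thesis by (simp add: mult.commute)
    qed
    show "degree (h j) \<le> j" by (rule assms(3))
  qed
  also have "\<dots> \<le> N" using assms(4)[OF jD] .
  finally show "degree (k2 ^ (D - j) * (- k1) ^ j * h j) \<le> N" .
qed simp

lemma caseA:
  assumes gf: "good f" and g0: "g \<noteq> 0" and tg: "tdeg g \<le> 2"
    and v: "(v1, v2) \<noteq> (0, 0)" and full: "\<And>l. eval2 g (x0 + l * v1) (y0 + l * v2) = 0"
  shows "card (zset f \<inter> zset g) \<le> 2 * tdeg f"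
proof -
  let ?l = "[:[:- (v2 * x0 - v1 * y0), v2:], [:- v1:]:]"
  have ab: "(v2, - v1) \<noteq> (0, 0)" using v by auto
  have t1: "tdeg ?l = 1" using tdeg_lin_eq[OF ab] .
  have irr: "irreducible ?l" using tdeg1_irreducible[OF t1] .
  define Q where "Q = (\<lambda>l::real. (x0 + l * v1, y0 + l * v2))"
  have injQ: "inj Q"
  proof (rule injI)
    fix a b assume "Q a = Q b"
    then have "a * v1 = b * v1" "a * v2 = b * v2" unfolding Q_def by auto
    then show "a = b" using v by auto
  qed
  have "range Q \<subseteq> zset ?l \<inter> zset g"
    unfolding Q_def zset_def using full by (auto simp: eval2_lin algebra_simps)
  moreover have "infinite (range Q)" using injQ finite_imageD infinite_UNIV_char_0 by blast
  ultimately have inf: "infinite (zset ?l \<inter> zset g)" using finite_subset by blast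
  have "?l dvd g" using CF[OF irr] inf by blast
  then obtain q where q: "g = ?l * q" by (auto elim: dvdE)
  have q0: "q \<noteq> 0" using q g0 by auto
  have l0: "?l \<noteq> 0" using t1 by (metis tdeg_0 zero_neq_one)
  have "tdeg g = 1 + tdeg q" using tdeg_mult[OF l0 q0] q t1 by simp
  then have tq: "tdeg q \<le> 1" using tg by simp
  have ev: "eval2 g a b = eval2 ?l a b * eval2 q a b" for a b unfolding q by (rule eval2_mult)
  have sub: "zset f \<inter> zset g \<subseteq> (zset f \<inter> zset ?l) \<union> (zset f \<inter> zset q)"
    unfolding zset_def using ev by auto
  have c1: "card (zset f \<inter> zset ?l) \<le> tdeg f" "finite (zset f \<inter> zset ?l)"
    using good_lin_card[OF gf l0] t1 by auto
  have c2: "card (zset f \<inter> zset q) \<le> tdeg f" "finite (zset f \<inter> zset q)"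
    using good_lin_card[OF gf q0 tq] by auto
  have "card (zset f \<inter> zset g) \<le> card ((zset f \<inter> zset ?l) \<union> (zset f \<inter> zset q))"
    by (rule card_mono) (use sub c1 c2 in auto)
  also have "\<dots> \<le> card (zset f \<inter> zset ?l) + card (zset f \<inter> zset q)" by (rule card_Un_le)
  also have "\<dots> \<le> 2 * tdeg f" using c1 c2 by simp
  finally show ?thesis .
qed


lemma term_degree:
  fixes k1 k2 h :: "real poly"
  assumes "degree k1 \<le> e" "degree k2 \<le> 2" "degree h \<le> j"
  shows "degree (k2 ^ (D - j) * (- k1) ^ j * h) \<le> (D - j) * 2 + j * e + j"
proof -
  have "degree (k2 ^ (D - j) * (- k1) ^ j * h) \<le> degree (k2 ^ (D - j)) + degree ((- k1) ^ j) + degree h"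
    by (meson add_le_mono degree_mult_le le_refl order_trans)
  also have "\<dots> \<le> (D - j) * 2 + j * e + j"
  proof (intro add_mono)
    show "degree (k2 ^ (D - j)) \<le> (D - j) * 2"
    proof -
      have a: "degree (k2 ^ (D - j)) \<le> degree k2 * (D - j)" by (rule degree_power_le)
      have b: "degree k2 * (D - j) \<le> 2 * (D - j)" using assms(2) by (rule mult_le_mono1)
      from a b show ?thesis by linarith
    qed
    show "degree ((- k1) ^ j) \<le> j * e"
    proof -
      have a: "degree ((- k1) ^ j) \<le> degree (- k1) * j" by (rule degree_power_le)
      have b: "degree (- k1) * j \<le> e * j" using assms(1) by (simp add: mult_le_mono1)
      from a b have "degree ((- k1) ^ j) \<le> e * j" by linarith
      then show ?thesis by (simp add: mult.commute)
    qed
    show "degree h \<le> j" by (rule assms(3))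
  qed
  finally show ?thesis .
qed

lemma good_conic_card:
  assumes gf: "good f" and g0: "g \<noteq> 0" and tg: "tdeg g \<le> 2"
  shows "card (zset f \<inter> zset g) \<le> 2 * tdeg f"
proof -
  define D where "D = tdeg f"
  define Z where "Z = zset f \<inter> zset g"
  have finZ: "finite Z" using good_finite[OF gf g0 tg] Z_def by simp
  have D2: "2 \<le> D" using good_tdeg gf D_def by simp
  show ?thesis
  proof (cases "Z = {}")
    case True
    then show ?thesis by (simp add: Z_def[symmetric])
  next
    case False
    then obtain x0 y0 where P0: "(x0, y0) \<in> Z" by auto
    define bad where "bad = (\<lambda>p. - (fst p - x0) / (snd p - y0)) ` Z"
    have "finite bad" using finZ bad_def by simp
    then obtain c where c: "c \<notin> bad" using ex_new_if_finite[OF infinite_UNIV_char_0] by blast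
    have Bnz: "(x - x0) + c * (y - y0) \<noteq> 0" if "(x, y) \<in> Z" "(x, y) \<noteq> (x0, y0)" for x y
    proof
      assume h: "(x - x0) + c * (y - y0) = 0"
      show False
      proof (cases "y = y0")
        case True
        then show False using h that by auto
      next
        case False
        then have "c = - (x - x0) / (y - y0)" using h by (simp add: field_simps)
        then have "c \<in> bad" unfolding bad_def using that(1) by force
        then show False using c by simp
      qed
    qed
    have pa: "poly [:1, - c:] m = 1 - c * m" for m by (simp add: algebra_simps)
    have pb: "poly [:c, 1:] m = c + m" for m by simp
    have PEf: "PE x0 y0 [:1, - c:] [:c, 1:] D (eval2 f)" unfolding D_def by (rule PE_eval2) auto
    obtain h where hdeg: "\<And>j. degree (h j) \<le> j"
      and hexp0: "\<And>l m. eval2 f (x0 + l * poly [:1, - c:] m) (y0 + l * poly [:c, 1:] m) = (\<Sum>j\<le>D. poly (h j) m * l ^ j)"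
      using PE_expand[OF PEf] by blast
    have hexp: "eval2 f (x0 + l * (1 - c * m)) (y0 + l * (c + m)) = (\<Sum>j\<le>D. poly (h j) m * l ^ j)" for l m
      using hexp0[of l m] unfolding pa pb .
    have PEg: "PE x0 y0 [:1, - c:] [:c, 1:] 2 (eval2 g)"
      by (rule PE_mono[OF PE_eval2 tg]) auto
    obtain k where kdeg: "\<And>j. degree (k j) \<le> j"
      and kexp0: "\<And>l m. eval2 g (x0 + l * poly [:1, - c:] m) (y0 + l * poly [:c, 1:] m) = (\<Sum>j\<le>2. poly (k j) m * l ^ j)"
      using PE_expand[OF PEg] by blast
    have f0: "eval2 f x0 y0 = 0" "eval2 g x0 y0 = 0" using P0 unfolding Z_def zset_def by auto
    have h0: "poly (h 0) m = 0" for m using hexp[of 0 m] f0 by (simp add: sum_at0)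
    have k0: "poly (k 0) m = 0" for m using kexp0[of 0 m] f0 sum_at0[of "\<lambda>j. poly (k j) m" 2] by simp
    have gexp: "eval2 g (x0 + l * (1 - c * m)) (y0 + l * (c + m)) = poly (k 1) m * l + poly (k 2) m * l\<^sup>2" for l m
      using kexp0[of l m] k0[of m] unfolding pa pb sum_le2 by simp
    show ?thesis
    proof (cases "\<exists>m. poly (k 1) m = 0 \<and> poly (k 2) m = 0")
      case True
      then obtain m where m: "poly (k 1) m = 0" "poly (k 2) m = 0" by blast
      have n: "1 + c\<^sup>2 \<noteq> 0" using zero_le_power2[of c] by linarith
      have v: "(1 - c * m, c + m) \<noteq> (0, 0)"
      proof
        assume "(1 - c * m, c + m) = (0, 0)"
        then have "m = - c" "1 - c * m = 0" by auto
        then have "1 + c\<^sup>2 = 0" by (simp add: power2_eq_square)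
        then show False using n by simp
      qed
      have full: "eval2 g (x0 + l * (1 - c * m)) (y0 + l * (c + m)) = 0" for l
        using gexp[of l m] m by simp
      show ?thesis using caseA[OF gf g0 tg v full] by simp
    next
      case False
      then have caseB: "poly (k 1) m \<noteq> 0 \<or> poly (k 2) m \<noteq> 0" for m by blast
      define lam where "lam = (\<lambda>m. - poly (k 1) m / poly (k 2) m)"
      define Pm where "Pm = (\<lambda>m. (x0 + lam m * (1 - c * m), y0 + lam m * (c + m)))"
      define mf where "mf = (\<lambda>p. ((snd p - y0) - c * (fst p - x0)) / ((fst p - x0) + c * (snd p - y0)))"
      define pp where "pp = (\<Sum>j\<le>D. k 2 ^ (D - j) * (- k 1) ^ j * h j)"
      have key: "Pm (mf p) = p \<and> poly (k 1) (mf p) \<noteq> 0 \<and> poly (k 2) (mf p) \<noteq> 0 \<and> poly pp (mf p) = 0"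
        if p: "p \<in> Z - {(x0, y0)}" for p
      proof -
        obtain x y where xy: "p = (x, y)" by (cases p)
        have B: "(x - x0) + c * (y - y0) \<noteq> 0" using Bnz p xy by auto
        define m where "m = mf p"
        define l where "l = ((x - x0) + c * (y - y0)) / (1 + c\<^sup>2)"
        have n: "1 + c\<^sup>2 \<noteq> 0" using zero_le_power2[of c] by linarith
        have mm: "m * ((x - x0) + c * (y - y0)) = (y - y0) - c * (x - x0)"
          unfolding m_def mf_def xy using B by simp
        have ll: "l * (1 + c\<^sup>2) = (x - x0) + c * (y - y0)" unfolding l_def using n by simp
        note pt = pencil_point[OF B mm ll]
        have px: "x0 + l * (1 - c * m) = x" "y0 + l * (c + m) = y" using pt by auto
        have "eval2 g x y = 0" "eval2 f x y = 0" using p xy unfolding Z_def zset_def by auto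
        then have g1: "poly (k 1) m * l + poly (k 2) m * l\<^sup>2 = 0" using gexp[of l m] px by simp
        then have g2: "l * (poly (k 1) m + poly (k 2) m * l) = 0" by (simp add: power2_eq_square algebra_simps)
        then have g3: "poly (k 1) m + poly (k 2) m * l = 0" using pt(3) by simp
        have k2: "poly (k 2) m \<noteq> 0" using g3 caseB[of m] by auto
        have lam: "lam m = l" unfolding lam_def using g3 k2 by (simp add: field_simps)
        have k1: "poly (k 1) m \<noteq> 0" using g3 k2 pt(3) by auto
        have "Pm m = p" unfolding Pm_def lam xy using px by simp
        moreover have "poly pp m = 0"
          unfolding pp_def pp_eval[OF k2] using hexp[of l m] px \<open>eval2 f x y = 0\<close> lam
          unfolding lam_def by simp
        ultimately show ?thesis using k1 k2 m_def by simp
      qed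
      have injmf: "inj_on mf (Z - {(x0, y0)})"
      proof (rule inj_onI)
        fix p q assume hp: "p \<in> Z - {(x0, y0)}" and hq: "q \<in> Z - {(x0, y0)}" and e: "mf p = mf q"
        have "p = Pm (mf p)" using key[OF hp] by simp
        also have "\<dots> = Pm (mf q)" using e by simp
        also have "\<dots> = q" using key[OF hq] by simp
        finally show "p = q" .
      qed
      define M where "M = mf ` (Z - {(x0, y0)})"
      have cardM: "card M = card Z - 1"
        unfolding M_def using card_image[OF injmf] P0 finZ by simp
      have finM: "finite M" unfolding M_def using finZ by simp
      have dk1: "degree (k 1) \<le> 1" and dk2: "degree (k 2) \<le> 2" using kdeg by auto
      have degpp: "degree pp \<le> 2 * D"
        unfolding pp_def by (rule pp_degree[OF dk1 dk2 hdeg]) auto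
      show ?thesis
      proof (cases "Z - {(x0, y0)} = {}")
        case True
        then have "Z = {(x0, y0)}" using P0 by auto
        then show ?thesis using D2 by (simp add: Z_def[symmetric] D_def[symmetric])
      next
        case False
        then obtain p where p: "p \<in> Z - {(x0, y0)}" by auto
        have k1ne: "k 1 \<noteq> 0" and k2ne: "k 2 \<noteq> 0" using key[OF p] by auto
        have pp0: "pp \<noteq> 0"
        proof
          assume pp0: "pp = 0"
          have kk: "k 1 * k 2 \<noteq> 0" using k1ne k2ne by simp
          define S where "S = UNIV - {m. poly (k 1 * k 2) m = 0}"
          have infS: "infinite S" unfolding S_def
            using poly_roots_finite[OF kk] infinite_UNIV_char_0 Diff_infinite_finite by blast
          have inS: "Pm m \<in> Z" if "m \<in> S" for m
          proof -
            have k1: "poly (k 1) m \<noteq> 0" and k2: "poly (k 2) m \<noteq> 0" using that unfolding S_def by auto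
            have lk: "poly (k 2) m * lam m = - poly (k 1) m" unfolding lam_def using k2 by simp
            have "eval2 g (fst (Pm m)) (snd (Pm m)) = lam m * (poly (k 1) m + poly (k 2) m * lam m)"
              unfolding Pm_def using gexp[of "lam m" m] by (simp add: power2_eq_square algebra_simps)
            also have "\<dots> = 0" using lk by (simp add: algebra_simps)
            finally have gz: "eval2 g (fst (Pm m)) (snd (Pm m)) = 0" .
            have "poly pp m = poly (k 2) m ^ D * eval2 f (fst (Pm m)) (snd (Pm m))"
              unfolding pp_def pp_eval[OF k2] Pm_def using hexp[of "lam m" m] unfolding lam_def by simp
            then have fz: "eval2 f (fst (Pm m)) (snd (Pm m)) = 0" using pp0 k2 by simp
            show ?thesis using gz fz unfolding Z_def zset_def by (cases "Pm m") auto
          qed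
          have injP: "inj_on Pm S"
          proof (rule inj_onI)
            fix m m' assume mS: "m \<in> S" "m' \<in> S" and e: "Pm m = Pm m'"
            have "lam m \<noteq> 0" using mS unfolding S_def lam_def by auto
            moreover have "lam m * (1 - c * m) = lam m' * (1 - c * m')"
              "lam m * (c + m) = lam m' * (c + m')" using e unfolding Pm_def by auto
            ultimately show "m = m'" by (rule pencil_inj)
          qed
          have "Pm ` S \<subseteq> Z" using inS by auto
          moreover have "infinite (Pm ` S)" using injP infS finite_imageD by blast
          ultimately show False using finZ finite_subset by blast
        qed
        have Mroots: "M \<subseteq> {m. poly pp m = 0}" unfolding M_def using key by auto
        have Mk1: "\<forall>m\<in>M. poly (k 1) m \<noteq> 0" unfolding M_def using key by auto
        have "card M \<le> 2 * D - 1"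
        proof (cases "coeff (k 1) 1 = 0")
          case False
          define mt where "mt = - coeff (k 1) 0 / coeff (k 1) 1"
          have mt1: "poly (k 1) mt = 0" unfolding poly_deg1[OF dk1] mt_def using False by simp
          have "poly pp mt = (\<Sum>j\<le>D. poly (k 2) mt ^ (D - j) * (- poly (k 1) mt) ^ j * poly (h j) mt)"
            unfolding pp_def by (simp add: poly_sum)
          also have "\<dots> = 0"
          proof (rule sum.neutral, intro ballI)
            fix j assume "j \<in> {..D}"
            show "poly (k 2) mt ^ (D - j) * (- poly (k 1) mt) ^ j * poly (h j) mt = 0"
            proof (cases "j = 0")
              case True
              then show ?thesis using h0 by simp
            next
              case False
              then show ?thesis using mt1 by simp
            qed
          qed
          finally have mtr: "poly pp mt = 0" .
          have "mt \<notin> M" using Mk1 mt1 by auto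
          then have "card (insert mt M) = card M + 1" using finM by simp
          moreover have "card (insert mt M) \<le> card {m. poly pp m = 0}"
            by (rule card_mono) (use poly_roots_finite[OF pp0] Mroots mtr in auto)
          moreover have "card {m. poly pp m = 0} \<le> degree pp" by (rule card_poly_roots_bound[OF pp0])
          ultimately show ?thesis using degpp by simp
        next
          case True
          have dk1': "degree (k 1) \<le> 0"
          proof (rule degree_le, intro allI impI)
            fix i :: nat assume "0 < i"
            show "coeff (k 1) i = 0"
            proof (cases "i = 1")
              case True
              then show ?thesis using \<open>coeff (k 1) 1 = 0\<close> by simp
            next
              case False
              then have "degree (k 1) < i" using \<open>0 < i\<close> dk1 by linarith
              then show ?thesis by (rule coeff_eq_0)
            qed
          qed
          have hz: "h 0 = 0" using h0 poly_all_0_iff_0 by blast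
          have "degree pp \<le> 2 * D - 1"
            unfolding pp_def
          proof (rule degree_sum_le)
            fix j assume "j \<in> {..D}"
            then have jD: "j \<le> D" by simp
            show "degree (k 2 ^ (D - j) * (- k 1) ^ j * h j) \<le> 2 * D - 1"
            proof (cases "j = 0")
              case True
              then show ?thesis using hz by simp
            next
              case False
              have "degree (k 2 ^ (D - j) * (- k 1) ^ j * h j) \<le> (D - j) * 2 + j * 0 + j"
                by (rule term_degree[OF dk1' dk2 hdeg])
              then show ?thesis using False jD by linarith
            qed
          qed simp
          moreover have "card M \<le> card {m. poly pp m = 0}"
            by (rule card_mono) (use poly_roots_finite[OF pp0] Mroots in auto)
          moreover have "card {m. poly pp m = 0} \<le> degree pp" by (rule card_poly_roots_bound[OF pp0])
          ultimately show ?thesis by simp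
        qed
        then have "card Z \<le> 2 * D" using cardM D2 by linarith
        then show ?thesis by (simp add: Z_def D_def)
      qed
    qed
  qed
qed

lemma line_circle:
  fixes n1 n2 c u v R :: real
  assumes nz: "(n1, n2) \<noteq> (0, 0)"
  shows "finite {p \<in> line_set n1 n2 c. (fst p - u)\<^sup>2 + (snd p - v)\<^sup>2 = R}"
    "card {p \<in> line_set n1 n2 c. (fst p - u)\<^sup>2 + (snd p - v)\<^sup>2 = R} \<le> 2"
proof -
  define N where "N = n1\<^sup>2 + n2\<^sup>2"
  have N0: "N \<noteq> 0" using nz unfolding N_def by (auto simp: sum_power2_eq_zero_iff)
  define x0 where "x0 = - n1 * c / N"
  define y0 where "y0 = - n2 * c / N"
  define P where "P = (\<lambda>l. (x0 + l * n2, y0 - l * n1))"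
  define r where "r = [:(x0 - u)\<^sup>2 + (y0 - v)\<^sup>2 - R, 2 * (n2 * (x0 - u) - n1 * (y0 - v)), N:]"
  have r0: "r \<noteq> 0" unfolding r_def using N0 by simp
  have dr: "degree r \<le> 2" unfolding r_def by (simp add: degree_pCons_le)
  have rv: "poly r l = (fst (P l) - u)\<^sup>2 + (snd (P l) - v)\<^sup>2 - R" for l
    unfolding r_def P_def N_def by (simp add: power2_eq_square algebra_simps)
  let ?S = "{p \<in> line_set n1 n2 c. (fst p - u)\<^sup>2 + (snd p - v)\<^sup>2 = R}"
  have sub: "?S \<subseteq> P ` {l. poly r l = 0}"
  proof
    fix p assume p: "p \<in> ?S"
    obtain x y where xy: "p = (x, y)" by (cases p)
    have lin: "n1 * x + n2 * y + c = 0" using p xy unfolding line_set_def by auto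
    define l where "l = (n2 * x - n1 * y) / N"
    have "P l = p" unfolding P_def xy l_def x0_def y0_def
      using line_param[OF N0 N_def lin] by simp
    moreover have "poly r l = 0" using rv[of l] p \<open>P l = p\<close> by auto
    ultimately show "p \<in> P ` {l. poly r l = 0}" by blast
  qed
  have fin: "finite (P ` {l. poly r l = 0})" using poly_roots_finite[OF r0] by simp
  show "finite ?S" using finite_subset[OF sub fin] .
  have "card ?S \<le> card (P ` {l. poly r l = 0})" by (rule card_mono[OF fin sub])
  also have "\<dots> \<le> card {l. poly r l = 0}" by (rule card_image_le) (use poly_roots_finite[OF r0] in auto)
  also have "\<dots> \<le> degree r" by (rule card_poly_roots_bound[OF r0])
  finally show "card ?S \<le> 2" using dr by simp
qed

lemma det_kernel:
  fixes b1 b2 g1 g2 :: real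
  assumes "b1 * g2 - b2 * g1 = 0"
  shows "\<exists>m1 m2. (m1, m2) \<noteq> (0, 0) \<and> m1 * b1 + m2 * g1 = 0 \<and> m1 * b2 + m2 * g2 = 0"
proof (cases "(g1, b1) = (0, 0)")
  case False
  show ?thesis
    by (rule exI[of _ g1], rule exI[of _ "- b1"]) (use False assms in \<open>auto simp: algebra_simps\<close>)
next
  case True
  show ?thesis
  proof (cases "(g2, b2) = (0, 0)")
    case False
    show ?thesis
      by (rule exI[of _ g2], rule exI[of _ "- b2"]) (use False True in \<open>auto simp: algebra_simps\<close>)
  next
    case False': True
    show ?thesis by (rule exI[of _ 1], rule exI[of _ 0]) (use True False' in auto)
  qed
qed

lemma degenerate_contra:
  fixes m1 m2 a1 a2 b1 b2 e1 e2 g1 g2 :: real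
  assumes m: "(m1, m2) \<noteq> (0, 0)"
    and hb: "m1 * b1 + m2 * g1 = 0" "m1 * b2 + m2 * g2 = 0"
    and ha: "m1 * a1 + m2 * e1 = 0" "m1 * a2 + m2 * e2 = 0"
    and hc: "m1 * (a1\<^sup>2 + a2\<^sup>2 - (b1\<^sup>2 + b2\<^sup>2)) + m2 * (e1\<^sup>2 + e2\<^sup>2 - (g1\<^sup>2 + g2\<^sup>2)) = 0"
    and c1: "a1\<^sup>2 + a2\<^sup>2 \<noteq> b1\<^sup>2 + b2\<^sup>2" and c2: "e1\<^sup>2 + e2\<^sup>2 \<noteq> g1\<^sup>2 + g2\<^sup>2"
    and c3: "(a1 - e1)\<^sup>2 + (a2 - e2)\<^sup>2 \<noteq> (b1 - g1)\<^sup>2 + (b2 - g2)\<^sup>2"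
  shows False
proof (cases "m1 = 0")
  case True
  then have "m2 \<noteq> 0" using m by auto
  then have "e1 = 0" "e2 = 0" "g1 = 0" "g2 = 0" using True ha hb by auto
  then show False using c2 by simp
next
  case False
  define t where "t = - m2 / m1"
  have a: "a1 = t * e1" "a2 = t * e2" using ha False unfolding t_def by (auto simp: field_simps)
  have b: "b1 = t * g1" "b2 = t * g2" using hb False unfolding t_def by (auto simp: field_simps)
  define E where "E = e1\<^sup>2 + e2\<^sup>2 - (g1\<^sup>2 + g2\<^sup>2)"
  have E0: "E \<noteq> 0" using c2 unfolding E_def by simp
  have "m1 * (t\<^sup>2 * E) + m2 * E = 0" using hc unfolding a b E_def by (simp add: power2_eq_square algebra_simps)
  then have "m1 * (t\<^sup>2 * E - t * E) = 0" unfolding t_def using False by (simp add: field_simps power2_eq_square)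
  then have "t * (t - 1) * E = 0" using False by (simp add: power2_eq_square algebra_simps)
  then have "t = 0 \<or> t = 1" using E0 by simp
  then show False
  proof
    assume "t = 0"
    then show False using c1 a b by simp
  next
    assume "t = 1"
    then show False using c3 a b by simp
  qed
qed

lemma lin_from_two:
  fixes x y x' y' i1 i2 j1 j2 k1 k2 l1 l2 :: real
  assumes h1: "(x - i1)\<^sup>2 + (y - i2)\<^sup>2 = (x' - j1)\<^sup>2 + (y' - j2)\<^sup>2"
    and h2: "(x - k1)\<^sup>2 + (y - k2)\<^sup>2 = (x' - l1)\<^sup>2 + (y' - l2)\<^sup>2"
  shows "(x - i1) * (k1 - i1) + (y - i2) * (k2 - i2) - ((x' - j1) * (l1 - j1) + (y' - j2) * (l2 - j2))
         = ((k1 - i1)\<^sup>2 + (k2 - i2)\<^sup>2 - ((l1 - j1)\<^sup>2 + (l2 - j2)\<^sup>2)) / 2"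
proof -
  have "2 * ((x - i1) * (k1 - i1) + (y - i2) * (k2 - i2) - ((x' - j1) * (l1 - j1) + (y' - j2) * (l2 - j2)))
         = (k1 - i1)\<^sup>2 + (k2 - i2)\<^sup>2 - ((l1 - j1)\<^sup>2 + (l2 - j2)\<^sup>2)"
    using h1 h2 by algebra
  then show ?thesis by simp
qed

definition Kc :: "real \<Rightarrow> bipoly" where "Kc r = [:[:r:]:]"
definition Lf :: "real \<Rightarrow> real \<Rightarrow> real \<Rightarrow> bipoly" where "Lf A B C = [:[:C, A:], [:B:]:]"

lemma eval2_Kc [simp]: "eval2 (Kc r) x y = r" unfolding Kc_def by simp
lemma eval2_Lf [simp]: "eval2 (Lf A B C) x y = A * x + B * y + C" unfolding Lf_def by (rule eval2_lin)
lemma tdeg_Kc: "tdeg (Kc r) \<le> n" unfolding Kc_def by simp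
lemma tdeg_Lf: "tdeg (Lf A B C) \<le> 1" unfolding Lf_def by (rule tdeg_lin)
lemma tl_add: "tdeg p \<le> n \<Longrightarrow> tdeg q \<le> n \<Longrightarrow> tdeg (p + q) \<le> n"
  using tdeg_add_le[of p q] by simp
lemma tl_diff: "tdeg p \<le> n \<Longrightarrow> tdeg q \<le> n \<Longrightarrow> tdeg (p - q) \<le> n"
  using tdeg_diff_le[of p q] by simp
lemma tl_Kl: "tdeg p \<le> n \<Longrightarrow> tdeg (Kc r * p) \<le> n"
  using tdeg_mult_le[of "Kc r" p] tdeg_Kc[of r 0] by simp
lemma tl_Kr: "tdeg p \<le> n \<Longrightarrow> tdeg (p * Kc r) \<le> n"
  using tdeg_mult_le[of p "Kc r"] tdeg_Kc[of r 0] by simp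
lemma tl_sq: "tdeg p \<le> 1 \<Longrightarrow> tdeg (p * p) \<le> 2"
  using tdeg_mult_le[of p p] by simp

lemma det_solve:
  fixes X' Y' b1 b2 g1 g2 R1 R2 :: real
  assumes "X' * b1 + Y' * b2 = R1" "X' * g1 + Y' * g2 = R2"
  shows "X' * (b1 * g2 - b2 * g1) = R1 * g2 - R2 * b2" "Y' * (b1 * g2 - b2 * g1) = b1 * R2 - g1 * R1"
proof -
  show "X' * (b1 * g2 - b2 * g1) = R1 * g2 - R2 * b2" unfolding assms[symmetric] by (simp add: algebra_simps)
  show "Y' * (b1 * g2 - b2 * g1) = b1 * R2 - g1 * R1" unfolding assms[symmetric] by (simp add: algebra_simps)
qed

lemma core_I:
  fixes f :: bipoly and i1 i2 j1 j2 k1 k2 l1 l2 u1 u2 w1 w2 :: real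
  assumes gf: "good f"
    and det: "(l1 - j1) * (w2 - j2) - (l2 - j2) * (w1 - j1) \<noteq> 0"
    and c1: "(k1 - i1)\<^sup>2 + (k2 - i2)\<^sup>2 \<noteq> (l1 - j1)\<^sup>2 + (l2 - j2)\<^sup>2"
  defines "T \<equiv> Cpair f (i1, i2) (j1, j2) \<inter> Cpair f (k1, k2) (l1, l2) \<inter> Cpair f (u1, u2) (w1, w2)"
  shows "finite T \<and> card T \<le> 2 * tdeg f"
proof -
  define a1 a2 b1 b2 e1 e2 g1 g2 where "a1 = k1 - i1" "a2 = k2 - i2" "b1 = l1 - j1" "b2 = l2 - j2"
     "e1 = u1 - i1" "e2 = u2 - i2" "g1 = w1 - j1" "g2 = w2 - j2"
  define C1 where "C1 = (a1\<^sup>2 + a2\<^sup>2 - (b1\<^sup>2 + b2\<^sup>2)) / 2"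
  define C2 where "C2 = (e1\<^sup>2 + e2\<^sup>2 - (g1\<^sup>2 + g2\<^sup>2)) / 2"
  define dt where "dt = b1 * g2 - b2 * g1"
  have dt0: "dt \<noteq> 0" using det unfolding dt_def a1_a2_b1_b2_e1_e2_g1_g2_def .
  have C10: "C1 \<noteq> 0" using c1 unfolding C1_def a1_a2_b1_b2_e1_e2_g1_g2_def by simp
  define HX where "HX = Lf 1 0 (- i1)"
  define HY where "HY = Lf 0 1 (- i2)"
  define HR1 where "HR1 = HX * Kc a1 + HY * Kc a2 - Kc C1"
  define HR2 where "HR2 = HX * Kc e1 + HY * Kc e2 - Kc C2"
  define HXp where "HXp = Kc (1 / dt) * (HR1 * Kc g2 - HR2 * Kc b2)"
  define HYp where "HYp = Kc (1 / dt) * (Kc b1 * HR2 - Kc g1 * HR1)"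
  define G where "G = HX * HX + HY * HY - HXp * HXp - HYp * HYp"
  have tX: "tdeg HX \<le> 1" "tdeg HY \<le> 1" unfolding HX_def HY_def by (rule tdeg_Lf)+
  have tR: "tdeg HR1 \<le> 1" "tdeg HR2 \<le> 1" unfolding HR1_def HR2_def
    by (intro tl_diff tl_add tl_Kr tdeg_Kc tX)+
  have tP: "tdeg HXp \<le> 1" "tdeg HYp \<le> 1" unfolding HXp_def HYp_def
    by (intro tl_Kl tl_diff tl_Kr tR)+
  have tG: "tdeg G \<le> 2" unfolding G_def by (intro tl_diff tl_add tl_sq tX tP)
  define Xp where "Xp = (\<lambda>x y. (((x - i1) * a1 + (y - i2) * a2 - C1) * g2 - ((x - i1) * e1 + (y - i2) * e2 - C2) * b2) / dt)"
  define Yp where "Yp = (\<lambda>x y. (b1 * ((x - i1) * e1 + (y - i2) * e2 - C2) - g1 * ((x - i1) * a1 + (y - i2) * a2 - C1)) / dt)"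
  have eX: "eval2 HX x y = x - i1" "eval2 HY x y = y - i2" for x y
    unfolding HX_def HY_def by simp_all
  have eR: "eval2 HR1 x y = (x - i1) * a1 + (y - i2) * a2 - C1"
     "eval2 HR2 x y = (x - i1) * e1 + (y - i2) * e2 - C2" for x y
    unfolding HR1_def HR2_def by (simp_all add: eX)
  have eP: "eval2 HXp x y = Xp x y" "eval2 HYp x y = Yp x y" for x y
    unfolding HXp_def HYp_def Xp_def Yp_def by (simp_all add: eR)
  have eG: "eval2 G x y = (x - i1)\<^sup>2 + (y - i2)\<^sup>2 - (Xp x y)\<^sup>2 - (Yp x y)\<^sup>2" for x y
    unfolding G_def by (simp add: eX eP power2_eq_square)
  have sol: "x' - j1 = Xp x y \<and> y' - j2 = Yp x y \<and> eval2 f x y = 0 \<and> eval2 G x y = 0"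
    if t: "((x, y), (x', y')) \<in> T" for x y x' y'
  proof -
    have h1: "(x - i1)\<^sup>2 + (y - i2)\<^sup>2 = (x' - j1)\<^sup>2 + (y' - j2)\<^sup>2"
      and h2: "(x - k1)\<^sup>2 + (y - k2)\<^sup>2 = (x' - l1)\<^sup>2 + (y' - l2)\<^sup>2"
      and h3: "(x - u1)\<^sup>2 + (y - u2)\<^sup>2 = (x' - w1)\<^sup>2 + (y' - w2)\<^sup>2"
      and fz: "eval2 f x y = 0"
      using t unfolding T_def Cpair_def by auto
    have L1: "(x - i1) * a1 + (y - i2) * a2 - ((x' - j1) * b1 + (y' - j2) * b2) = C1"
      using lin_from_two[OF h1 h2] unfolding C1_def a1_a2_b1_b2_e1_e2_g1_g2_def .
    have L2: "(x - i1) * e1 + (y - i2) * e2 - ((x' - j1) * g1 + (y' - j2) * g2) = C2"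
      using lin_from_two[OF h1 h3] unfolding C2_def a1_a2_b1_b2_e1_e2_g1_g2_def .
    have S: "(x' - j1) * b1 + (y' - j2) * b2 = (x - i1) * a1 + (y - i2) * a2 - C1"
            "(x' - j1) * g1 + (y' - j2) * g2 = (x - i1) * e1 + (y - i2) * e2 - C2"
      using L1 L2 by linarith+
    note ds = det_solve[OF S]
    have xe: "x' - j1 = Xp x y" unfolding Xp_def using ds(1) dt0 unfolding dt_def
      by (simp add: eq_divide_eq)
    have ye: "y' - j2 = Yp x y" unfolding Yp_def using ds(2) dt0 unfolding dt_def
      by (simp add: eq_divide_eq)
    have "eval2 G x y = 0" using eG[of x y] h1 xe ye by simp
    then show ?thesis using xe ye fz by simp
  qed
  have G0: "G \<noteq> 0"
  proof
    assume "G = 0"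
    then have "eval2 G i1 i2 = 0" by simp
    moreover have "eval2 G i1 i2 = 0 - (Xp i1 i2)\<^sup>2 - (Yp i1 i2)\<^sup>2" using eG[of i1 i2] by simp
    ultimately have z: "(Xp i1 i2)\<^sup>2 + (Yp i1 i2)\<^sup>2 = 0" by linarith
    have "Xp i1 i2 * b1 + Yp i1 i2 * b2 = - C1"
    proof -
      have "Xp i1 i2 * dt = - C1 * g2 + C2 * b2" "Yp i1 i2 * dt = - b1 * C2 + g1 * C1"
        unfolding Xp_def Yp_def using dt0 by simp_all
      then have "(Xp i1 i2 * b1 + Yp i1 i2 * b2) * dt = (- C1) * dt" unfolding dt_def by algebra
      then show ?thesis using dt0 by (metis mult_right_cancel)
    qed
    moreover have "Xp i1 i2 = 0 \<and> Yp i1 i2 = 0" using sum_power2_eq_zero_iff[of "Xp i1 i2" "Yp i1 i2"] z by blast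
    ultimately show False using C10 by simp
  qed
  have sub: "fst ` T \<subseteq> zset f \<inter> zset G"
  proof
    fix p assume "p \<in> fst ` T"
    then obtain x y x' y' where "((x, y), (x', y')) \<in> T" "p = (x, y)" by force
    then show "p \<in> zset f \<inter> zset G" using sol unfolding zset_def by auto
  qed
  have inj: "inj_on fst T"
  proof (rule inj_onI)
    fix s t assume s: "s \<in> T" and t: "t \<in> T" and e: "fst s = fst t"
    obtain x y x' y' where sx: "s = ((x, y), (x', y'))" by (metis prod.collapse)
    obtain x2 y2 x2' y2' where tx: "t = ((x2, y2), (x2', y2'))" by (metis prod.collapse)
    have "x2 = x" "y2 = y" using e sx tx by auto
    then show "s = t" using sol[of x y x' y'] sol[of x y x2' y2'] s t sx tx by auto
  qed
  have finZ: "finite (zset f \<inter> zset G)" by (rule good_finite[OF gf G0 tG])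
  have cZ: "card (zset f \<inter> zset G) \<le> 2 * tdeg f" by (rule good_conic_card[OF gf G0 tG])
  have finT: "finite T" using finite_imageD[OF finite_subset[OF sub finZ] inj] .
  have "card T = card (fst ` T)" using card_image[OF inj] by simp
  also have "\<dots> \<le> card (zset f \<inter> zset G)" by (rule card_mono[OF finZ sub])
  finally show ?thesis using cZ finT by simp
qed


lemma core_III:
  fixes f :: bipoly and i1 i2 j1 j2 k1 k2 l1 l2 u1 u2 w1 w2 :: real
  assumes gf: "good f"
    and detb: "(l1 - j1) * (w2 - j2) - (l2 - j2) * (w1 - j1) = 0"
    and deta: "(k1 - i1) * (u2 - i2) - (k2 - i2) * (u1 - i1) = 0"
    and c1: "(k1 - i1)\<^sup>2 + (k2 - i2)\<^sup>2 \<noteq> (l1 - j1)\<^sup>2 + (l2 - j2)\<^sup>2"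
    and c2: "(u1 - i1)\<^sup>2 + (u2 - i2)\<^sup>2 \<noteq> (w1 - j1)\<^sup>2 + (w2 - j2)\<^sup>2"
    and c3: "(k1 - u1)\<^sup>2 + (k2 - u2)\<^sup>2 \<noteq> (l1 - w1)\<^sup>2 + (l2 - w2)\<^sup>2"
  defines "T \<equiv> Cpair f (i1, i2) (j1, j2) \<inter> Cpair f (k1, k2) (l1, l2) \<inter> Cpair f (u1, u2) (w1, w2)"
  shows "finite T \<and> card T \<le> 2 * tdeg f"
proof -
  define a1 a2 b1 b2 e1 e2 g1 g2 where "a1 = k1 - i1" "a2 = k2 - i2" "b1 = l1 - j1" "b2 = l2 - j2"
     "e1 = u1 - i1" "e2 = u2 - i2" "g1 = w1 - j1" "g2 = w2 - j2"
  note defs = a1_a2_b1_b2_e1_e2_g1_g2_def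
  define C1 where "C1 = (a1\<^sup>2 + a2\<^sup>2 - (b1\<^sup>2 + b2\<^sup>2)) / 2"
  define C2 where "C2 = (e1\<^sup>2 + e2\<^sup>2 - (g1\<^sup>2 + g2\<^sup>2)) / 2"
  have c1': "a1\<^sup>2 + a2\<^sup>2 \<noteq> b1\<^sup>2 + b2\<^sup>2" and c2': "e1\<^sup>2 + e2\<^sup>2 \<noteq> g1\<^sup>2 + g2\<^sup>2"
    using c1 c2 unfolding defs by auto
  have c3': "(a1 - e1)\<^sup>2 + (a2 - e2)\<^sup>2 \<noteq> (b1 - g1)\<^sup>2 + (b2 - g2)\<^sup>2"
  proof -
    have "a1 - e1 = k1 - u1" "a2 - e2 = k2 - u2" "b1 - g1 = l1 - w1" "b2 - g2 = l2 - w2"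
      unfolding defs by simp_all
    then show ?thesis using c3 by simp
  qed
  obtain m1 m2 where m: "(m1, m2) \<noteq> (0, 0)" "m1 * b1 + m2 * g1 = 0" "m1 * b2 + m2 * g2 = 0"
    using det_kernel[of b1 g2 b2 g1] detb unfolding defs by auto
  obtain v1 v2 where v: "(v1, v2) \<noteq> (0, 0)" "v1 * a1 + v2 * e1 = 0" "v1 * a2 + v2 * e2 = 0"
    using det_kernel[of a1 e2 a2 e1] deta unfolding defs by auto
  define n1 n2 r where "n1 = m1 * a1 + m2 * e1" "n2 = m1 * a2 + m2 * e2" "r = m1 * C1 + m2 * C2"
  define n1' n2' r' where "n1' = v1 * b1 + v2 * g1" "n2' = v1 * b2 + v2 * g2" "r' = - (v1 * C1 + v2 * C2)"
  have props: "(x - i1) * n1 + (y - i2) * n2 = r \<and> (x' - j1) * n1' + (y' - j2) * n2' = r' \<and>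
      eval2 f x y = 0 \<and> (x' - j1)\<^sup>2 + (y' - j2)\<^sup>2 = (x - i1)\<^sup>2 + (y - i2)\<^sup>2"
    if t: "((x, y), (x', y')) \<in> T" for x y x' y'
  proof -
    have h1: "(x - i1)\<^sup>2 + (y - i2)\<^sup>2 = (x' - j1)\<^sup>2 + (y' - j2)\<^sup>2"
      and h2: "(x - k1)\<^sup>2 + (y - k2)\<^sup>2 = (x' - l1)\<^sup>2 + (y' - l2)\<^sup>2"
      and h3: "(x - u1)\<^sup>2 + (y - u2)\<^sup>2 = (x' - w1)\<^sup>2 + (y' - w2)\<^sup>2"
      and fz: "eval2 f x y = 0"
      using t unfolding T_def Cpair_def by auto
    have L1: "(x - i1) * a1 + (y - i2) * a2 - ((x' - j1) * b1 + (y' - j2) * b2) = C1"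
      using lin_from_two[OF h1 h2] unfolding C1_def defs .
    have L2: "(x - i1) * e1 + (y - i2) * e2 - ((x' - j1) * g1 + (y' - j2) * g2) = C2"
      using lin_from_two[OF h1 h3] unfolding C2_def defs .
    have "(x - i1) * n1 + (y - i2) * n2 =
       m1 * ((x - i1) * a1 + (y - i2) * a2 - ((x' - j1) * b1 + (y' - j2) * b2)) +
       m2 * ((x - i1) * e1 + (y - i2) * e2 - ((x' - j1) * g1 + (y' - j2) * g2)) +
       (x' - j1) * (m1 * b1 + m2 * g1) + (y' - j2) * (m1 * b2 + m2 * g2)"
      unfolding n1_n2_r_def by (simp add: algebra_simps)
    then have "(x - i1) * n1 + (y - i2) * n2 = r" using L1 L2 m(2,3) unfolding n1_n2_r_def by simp
    moreover have "(x' - j1) * n1' + (y' - j2) * n2' =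
       - (v1 * ((x - i1) * a1 + (y - i2) * a2 - ((x' - j1) * b1 + (y' - j2) * b2)) +
       v2 * ((x - i1) * e1 + (y - i2) * e2 - ((x' - j1) * g1 + (y' - j2) * g2))) +
       (x - i1) * (v1 * a1 + v2 * e1) + (y - i2) * (v1 * a2 + v2 * e2)"
      unfolding n1'_n2'_r'_def by (simp add: algebra_simps)
    then have "(x' - j1) * n1' + (y' - j2) * n2' = r'" using L1 L2 v(2,3) unfolding n1'_n2'_r'_def by simp
    ultimately show ?thesis using fz h1 by simp
  qed
  show ?thesis
  proof (cases "T = {}")
    case True
    then show ?thesis by simp
  next
    case False
    then obtain x y x' y' where t0: "((x, y), (x', y')) \<in> T" by (metis prod.collapse ex_in_conv)
    note p0 = props[OF t0]
    have n0: "(n1, n2) \<noteq> (0, 0)"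
    proof
      assume "(n1, n2) = (0, 0)"
      then have z: "n1 = 0" "n2 = 0" by auto
      then have "r = 0" using p0 by simp
      then have hc: "m1 * (a1\<^sup>2 + a2\<^sup>2 - (b1\<^sup>2 + b2\<^sup>2)) + m2 * (e1\<^sup>2 + e2\<^sup>2 - (g1\<^sup>2 + g2\<^sup>2)) = 0"
        unfolding n1_n2_r_def C1_def C2_def by simp
      show False by (rule degenerate_contra[OF m(1) m(2,3) _ _ hc c1' c2' c3']) (use z in \<open>simp_all add: n1_n2_r_def\<close>)
    qed
    have n0': "(n1', n2') \<noteq> (0, 0)"
    proof
      assume "(n1', n2') = (0, 0)"
      then have z: "n1' = 0" "n2' = 0" by auto
      then have "r' = 0" using p0 by simp
      then have hc: "v1 * (a1\<^sup>2 + a2\<^sup>2 - (b1\<^sup>2 + b2\<^sup>2)) + v2 * (e1\<^sup>2 + e2\<^sup>2 - (g1\<^sup>2 + g2\<^sup>2)) = 0"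
        unfolding n1'_n2'_r'_def C1_def C2_def by simp
      show False by (rule degenerate_contra[OF v(1) _ _ v(2,3) hc c1' c2' c3']) (use z in \<open>simp_all add: n1'_n2'_r'_def\<close>)
    qed
    define cA where "cA = - (n1 * i1 + n2 * i2) - r"
    define cB where "cB = - (n1' * j1 + n2' * j2) - r'"
    define A where "A = zset f \<inter> line_set n1 n2 cA"
    define B where "B = (\<lambda>q. {p \<in> line_set n1' n2' cB. (fst p - j1)\<^sup>2 + (snd p - j2)\<^sup>2 = (fst q - i1)\<^sup>2 + (snd q - i2)\<^sup>2})"
    have h0: "[:[:cA, n1:], [:n2:]:] \<noteq> 0" using n0 by auto
    have finA: "finite A" and cardA: "card A \<le> tdeg f"
      using good_lin_card[OF gf h0 tdeg_lin] unfolding A_def zset_lin by auto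
    have finB: "finite (B q)" and cardB: "card (B q) \<le> 2" for q
      unfolding B_def using line_circle[OF n0'] by auto
    have sub: "T \<subseteq> Sigma A B"
    proof
      fix t assume t: "t \<in> T"
      obtain x y x' y' where tx: "t = ((x, y), (x', y'))" by (metis prod.collapse)
      note pr = props[OF t[unfolded tx]]
      have "(x, y) \<in> A" unfolding A_def zset_def line_set_def cA_def using pr by (auto simp: algebra_simps)
      moreover have "(x', y') \<in> B (x, y)" unfolding B_def line_set_def cB_def using pr by (auto simp: algebra_simps)
      ultimately show "t \<in> Sigma A B" using tx by auto
    qed
    have finS: "finite (Sigma A B)" using finA finB by simp
    have "card T \<le> card (Sigma A B)" by (rule card_mono[OF finS sub])
    also have "\<dots> = (\<Sum>q\<in>A. card (B q))" by (rule card_SigmaI[OF finA]) (use finB in auto)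
    also have "\<dots> \<le> card A * 2" using sum_bounded_above[of A "\<lambda>q. card (B q)" 2] cardB by simp
    also have "\<dots> \<le> 2 * tdeg f" using cardA by simp
    finally show ?thesis using finite_subset[OF sub finS] by simp
  qed
qed

lemma f2_irreducible:
  assumes irc: "irreducible_curve C" and f0: "f \<noteq> 0" and Cf: "C = zset f"
    and td: "tdeg f = curve_degree C"
  shows "irreducible f"
proof -
  obtain g where g: "g \<noteq> 0" "irreducible g" "C = zset g" and inf: "infinite C"
    using irc unfolding irreducible_curve_def plane_curve_def by blast
  have "g dvd f"
  proof (rule ccontr)
    assume "\<not> g dvd f"
    then have "finite (zset g \<inter> zset f)" by (rule CF[OF g(2)])
    then show False using inf Cf g(3) by simp
  qed
  then obtain h where h: "f = g * h" by (auto elim: dvdE)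
  have h0: "h \<noteq> 0" using h f0 by auto
  have "curve_degree C \<le> tdeg g"
    unfolding curve_degree_def by (rule Least_le) (use g in blast)
  then have "tdeg g + tdeg h \<le> tdeg g" using td h tdeg_mult[OF g(1) h0] by simp
  then have "tdeg h = 0" by simp
  then have "is_unit h" using tdeg0_unit h0 by blast
  then show ?thesis using h g(2) irreducible_mult_unit_left[of h g] by (simp add: mult.commute)
qed

lemma Cpair_swap: "Cpair f p q = prod.swap ` Cpair f q p"
  unfolding Cpair_def by (auto simp: image_iff)

lemma dist_sq_ne:
  fixes a1 a2 b1 b2 c1 c2 d1 d2 :: real
  assumes "dist (a1, a2) (b1, b2) \<noteq> dist (c1, c2) (d1, d2)"
  shows "(b1 - a1)\<^sup>2 + (b2 - a2)\<^sup>2 \<noteq> (d1 - c1)\<^sup>2 + (d2 - c2)\<^sup>2"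
proof
  assume e: "(b1 - a1)\<^sup>2 + (b2 - a2)\<^sup>2 = (d1 - c1)\<^sup>2 + (d2 - c2)\<^sup>2"
  have "dist (a1, a2) (b1, b2) = sqrt ((b1 - a1)\<^sup>2 + (b2 - a2)\<^sup>2)"
    by (simp add: dist_Pair_Pair dist_real_def power2_commute)
  moreover have "dist (c1, c2) (d1, d2) = sqrt ((d1 - c1)\<^sup>2 + (d2 - c2)\<^sup>2)"
    by (simp add: dist_Pair_Pair dist_real_def power2_commute)
  ultimately show False using assms e by simp
qed

theorem lemma4p2:
  fixes d :: nat and C1 C2 :: "(real \<times> real) set" and f1 f2 :: bipoly
    and S1 S2 :: "(real \<times> real) set"
    and pi pj pk pl pu pw :: "real \<times> real"
  assumes "d \<ge> 1"
    and "irreducible_curve C1" and "irreducible_curve C2"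
    and "curve_degree C1 \<le> d" and "curve_degree C2 \<le> d"
    and "f1 \<noteq> 0" and "C1 = zset f1" and "tdeg f1 = curve_degree C1"
    and "f2 \<noteq> 0" and "C2 = zset f2" and "tdeg f2 = curve_degree C2"
    and "finite S1" and "S1 \<subseteq> C1" and "finite S2" and "S2 \<subseteq> C2"
    and "\<not> is_vertical_line C1" and "\<not> is_vertical_line C2"
    and "S1 \<inter> S2 = {}"
    and "circle_cond C1 S2" and "circle_cond C2 S1"
    and "line_cond C1 S2" and "line_cond C2 S1"
    and "pi \<in> S1" and "pj \<in> S1" and "pk \<in> S1" and "pl \<in> S1" and "pu \<in> S1" and "pw \<in> S1"
    and "dist pi pk \<noteq> dist pj pl" and "dist pi pu \<noteq> dist pj pw" and "dist pk pu \<noteq> dist pl pw"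
    and "\<not> is_conic C2" and "\<not> is_line C2"
  shows "finite (Cpair f2 pi pj \<inter> Cpair f2 pk pl \<inter> Cpair f2 pu pw) \<and>
         card (Cpair f2 pi pj \<inter> Cpair f2 pk pl \<inter> Cpair f2 pu pw) \<le> 2 * d"
proof -
  have irr: "irreducible f2" using f2_irreducible assms(3,9,10,11) by blast
  have inf: "infinite C2" using assms(3) unfolding irreducible_curve_def plane_curve_def by blast
  have gf: "good f2" unfolding good_def using irr inf assms(10,11,32,33) by simp
  have td: "tdeg f2 \<le> d" using assms(5,11) by simp
  obtain i1 i2 where pi: "pi = (i1, i2)" by (cases pi)
  obtain j1 j2 where pj: "pj = (j1, j2)" by (cases pj)
  obtain k1 k2 where pk: "pk = (k1, k2)" by (cases pk)
  obtain l1 l2 where pl: "pl = (l1, l2)" by (cases pl)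
  obtain u1 u2 where pu: "pu = (u1, u2)" by (cases pu)
  obtain w1 w2 where pw: "pw = (w1, w2)" by (cases pw)
  have c1: "(k1 - i1)\<^sup>2 + (k2 - i2)\<^sup>2 \<noteq> (l1 - j1)\<^sup>2 + (l2 - j2)\<^sup>2"
    using dist_sq_ne assms(29) pi pj pk pl by simp
  have c2: "(u1 - i1)\<^sup>2 + (u2 - i2)\<^sup>2 \<noteq> (w1 - j1)\<^sup>2 + (w2 - j2)\<^sup>2"
    using dist_sq_ne assms(30) pi pj pu pw by simp
  have c3: "(u1 - k1)\<^sup>2 + (u2 - k2)\<^sup>2 \<noteq> (w1 - l1)\<^sup>2 + (w2 - l2)\<^sup>2"
    using dist_sq_ne assms(31) pk pl pu pw by simp
  have c3': "(k1 - u1)\<^sup>2 + (k2 - u2)\<^sup>2 \<noteq> (l1 - w1)\<^sup>2 + (l2 - w2)\<^sup>2"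
    using c3 by (simp add: power2_commute)
  let ?T = "Cpair f2 pi pj \<inter> Cpair f2 pk pl \<inter> Cpair f2 pu pw"
  have main: "finite ?T \<and> card ?T \<le> 2 * tdeg f2"
  proof (cases "(l1 - j1) * (w2 - j2) - (l2 - j2) * (w1 - j1) \<noteq> 0")
    case True
    show ?thesis using core_I[OF gf True c1] unfolding pi pj pk pl pu pw .
  next
    case nb: False
    show ?thesis
    proof (cases "(k1 - i1) * (u2 - i2) - (k2 - i2) * (u1 - i1) \<noteq> 0")
      case True
      have c1s: "(l1 - j1)\<^sup>2 + (l2 - j2)\<^sup>2 \<noteq> (k1 - i1)\<^sup>2 + (k2 - i2)\<^sup>2" using c1 by simp
      let ?T' = "Cpair f2 (j1, j2) (i1, i2) \<inter> Cpair f2 (l1, l2) (k1, k2) \<inter> Cpair f2 (w1, w2) (u1, u2)"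
      have core: "finite ?T' \<and> card ?T' \<le> 2 * tdeg f2" using core_I[OF gf True c1s] .
      have eq: "?T = prod.swap ` ?T'"
        unfolding pi pj pk pl pu pw
        by (subst (1 2 3) Cpair_swap) (simp add: image_Int swap_inj_on)
      have "card (prod.swap ` ?T') = card ?T'" by (rule card_image) (simp add: swap_inj_on)
      then show ?thesis using core eq by simp
    next
      case False
      then show ?thesis using core_III[OF gf _ _ c1 c2 c3'] nb unfolding pi pj pk pl pu pw by simp
    qed
  qed
  then show ?thesis using td by simp
qed

end
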